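(* Let $V$ be a real vector space of finite even dimension with nondegenerate quadratic form $Q$, and let $\sigma$ be an admissible real structure on $\mathbb{C}l(V)$. Let $V_+=V\cap V_\sigma$ and $V_-=V\cap iV_\sigma$. The following are equivalent: (1) $Q$ is positive definite on $V_+$ and negative definite on $V_-$; (2) the quadratic form $Q_\sigma$ on $V$ is positive definite; (3) the restriction of $Q$ to $V_\sigma$ is positive definite; (4) the $\sigma$-product $(\cdot,\cdot)_\sigma$ is positive definite.
   Context: $Cl(V,Q)$ is the real Clifford algebra with $v^2=+Q(v)$, $\mathbb{C}l(V)$ its complexification with complex conjugation $c$, $V^{\mathbb{C}}\subset\mathbb{C}l(V)$, $B$ the bilinear form of $Q$ extended complex-bilinearly. A real structure is an involutive antilinear algebra automorphism of $\mathbb{C}l(V)$ stabilizing $V^{\mathbb{C}}$; it is admissible if it commutes with $c$ (then $V=V_+\oplus V_-$ is a $Q$-orthogonal decomposition). $V_\sigma=\{v\in V^{\mathbb{C}}:\sigma(v)=v\}$; $Q_\sigma(v)=B(\sigma(v),v)$ for $v\in V$. $T$ is the linear antiautomorphism of $\mathbb{C}l(V)$ restricting to the identity on $V$; $\tau_n$ is the normalized trace (the unique linear form with $\tau_n(ab)=\tau_n(ba)$, $\tau_n(1)=1$); the $\sigma$-product is $(a,b)_\sigma=\tau_n(\sigma(T(a))b)$. *)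

theory Defs
  imports "HOL-Analysis.Analysis"
begin

definition quadratic_form :: "('v::real_vector \<Rightarrow> real) \<Rightarrow> bool" where
  "quadratic_form Q \<longleftrightarrow>
     (\<exists>b. bilinear b \<and> (\<forall>u v. b u v = b v u) \<and> (\<forall>v. Q v = b v v))"

definition polar :: "('v::real_vector \<Rightarrow> real) \<Rightarrow> 'v \<Rightarrow> 'v \<Rightarrow> real" where
  "polar Q u v = (Q (u + v) - Q u - Q v) / 2"

definition nondegenerate :: "('v::real_vector \<Rightarrow> real) \<Rightarrow> bool" where
  "nondegenerate Q \<longleftrightarrow> (\<forall>u. (\<forall>v. polar Q u v = 0) \<longrightarrow> u = 0)"

definition finite_dim_space :: "'v::real_vector itself \<Rightarrow> bool" where
  "finite_dim_space _ \<longleftrightarrow> (\<exists>S::'v set. finite S \<and> span S = UNIV)"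

definition complex_algebra :: "(complex \<Rightarrow> 'a::ring_1 \<Rightarrow> 'a) \<Rightarrow> bool" where
  "complex_algebra sm \<longleftrightarrow> module sm \<and>
     (\<forall>c x y. sm c (x * y) = sm c x * y \<and> sm c (x * y) = x * sm c y)"

definition complex_dim :: "(complex \<Rightarrow> 'a::ring_1 \<Rightarrow> 'a) \<Rightarrow> nat" where
  "complex_dim sm = vector_space.dim sm (UNIV :: 'a set)"

definition generates :: "(complex \<Rightarrow> 'a::ring_1 \<Rightarrow> 'a) \<Rightarrow> 'a set \<Rightarrow> bool" where
  "generates sm G \<longleftrightarrow>
     (\<forall>S. 1 \<in> S \<and> G \<subseteq> S \<and> (\<forall>x\<in>S. \<forall>y\<in>S. x + y \<in> S \<and> x * y \<in> S)
          \<and> (\<forall>c. \<forall>x\<in>S. sm c x \<in> S) \<longrightarrow> S = UNIV)"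

text \<open>\<open>(sm, \<iota>)\<close> presents \<open>\<complex>l(V) = Cl(V,Q) \<otimes> \<complex>\<close>: a complex algebra generated by a
  real-linear image of V with \<open>\<iota>(v)\<^sup>2 = +Q(v)\<close>, of complex dimension \<open>2^dim V\<close>
  (hence isomorphic to the universal one).\<close>
definition complex_clifford ::
  "('v::real_vector \<Rightarrow> real) \<Rightarrow> (complex \<Rightarrow> 'a::ring_1 \<Rightarrow> 'a) \<Rightarrow> ('v \<Rightarrow> 'a) \<Rightarrow> bool" where
  "complex_clifford Q sm \<iota> \<longleftrightarrow>
     complex_algebra sm \<and>
     (\<forall>u v. \<iota> (u + v) = \<iota> u + \<iota> v) \<and>
     (\<forall>r v. \<iota> (r *\<^sub>R v) = sm (complex_of_real r) (\<iota> v)) \<and>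
     (\<forall>v. \<iota> v * \<iota> v = sm (complex_of_real (Q v)) 1) \<and>
     generates sm (range \<iota>) \<and>
     complex_dim sm = 2 ^ dim (UNIV :: 'v set)"

definition VC :: "(complex \<Rightarrow> 'a::ring_1 \<Rightarrow> 'a) \<Rightarrow> ('v \<Rightarrow> 'a) \<Rightarrow> 'a set" where
  "VC sm \<iota> = {\<iota> u + sm \<i> (\<iota> w) | u w. True}"

text \<open>Complex-bilinear extension of B to \<open>V^\<complex>\<close>.\<close>
definition Bc :: "('v::real_vector \<Rightarrow> real) \<Rightarrow> (complex \<Rightarrow> 'a::ring_1 \<Rightarrow> 'a) \<Rightarrow> ('v \<Rightarrow> 'a)
    \<Rightarrow> 'a \<Rightarrow> 'a \<Rightarrow> complex" where
  "Bc Q sm \<iota> x y = (THE z. \<exists>u1 w1 u2 w2.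
       x = \<iota> u1 + sm \<i> (\<iota> w1) \<and> y = \<iota> u2 + sm \<i> (\<iota> w2) \<and>
       z = Complex (polar Q u1 u2 - polar Q w1 w2) (polar Q u1 w2 + polar Q w1 u2))"

definition antilinear_automorphism :: "(complex \<Rightarrow> 'a::ring_1 \<Rightarrow> 'a) \<Rightarrow> ('a \<Rightarrow> 'a) \<Rightarrow> bool" where
  "antilinear_automorphism sm f \<longleftrightarrow> bij f \<and>
     (\<forall>x y. f (x + y) = f x + f y) \<and> (\<forall>c x. f (sm c x) = sm (cnj c) (f x)) \<and>
     (\<forall>x y. f (x * y) = f x * f y) \<and> f 1 = 1"

definition cconj :: "(complex \<Rightarrow> 'a::ring_1 \<Rightarrow> 'a) \<Rightarrow> ('v \<Rightarrow> 'a) \<Rightarrow> 'a \<Rightarrow> 'a" where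
  "cconj sm \<iota> = (THE c. antilinear_automorphism sm c \<and> (\<forall>v. c (\<iota> v) = \<iota> v))"

definition real_structure :: "(complex \<Rightarrow> 'a::ring_1 \<Rightarrow> 'a) \<Rightarrow> ('v \<Rightarrow> 'a) \<Rightarrow> ('a \<Rightarrow> 'a) \<Rightarrow> bool" where
  "real_structure sm \<iota> \<sigma> \<longleftrightarrow> antilinear_automorphism sm \<sigma> \<and> (\<forall>x. \<sigma> (\<sigma> x) = x) \<and>
     \<sigma> ` VC sm \<iota> \<subseteq> VC sm \<iota>"

definition admissible :: "(complex \<Rightarrow> 'a::ring_1 \<Rightarrow> 'a) \<Rightarrow> ('v \<Rightarrow> 'a) \<Rightarrow> ('a \<Rightarrow> 'a) \<Rightarrow> bool" where
  "admissible sm \<iota> \<sigma> \<longleftrightarrow> real_structure sm \<iota> \<sigma> \<and> \<sigma> \<circ> cconj sm \<iota> = cconj sm \<iota> \<circ> \<sigma>"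

definition Vsigma :: "(complex \<Rightarrow> 'a::ring_1 \<Rightarrow> 'a) \<Rightarrow> ('v \<Rightarrow> 'a) \<Rightarrow> ('a \<Rightarrow> 'a) \<Rightarrow> 'a set" where
  "Vsigma sm \<iota> \<sigma> = {x \<in> VC sm \<iota>. \<sigma> x = x}"

definition Qsigma :: "('v::real_vector \<Rightarrow> real) \<Rightarrow> (complex \<Rightarrow> 'a::ring_1 \<Rightarrow> 'a) \<Rightarrow> ('v \<Rightarrow> 'a)
    \<Rightarrow> ('a \<Rightarrow> 'a) \<Rightarrow> 'v \<Rightarrow> complex" where
  "Qsigma Q sm \<iota> \<sigma> v = Bc Q sm \<iota> (\<sigma> (\<iota> v)) (\<iota> v)"

definition transp :: "(complex \<Rightarrow> 'a::ring_1 \<Rightarrow> 'a) \<Rightarrow> ('v \<Rightarrow> 'a) \<Rightarrow> 'a \<Rightarrow> 'a" where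
  "transp sm \<iota> = (THE T. (\<forall>x y. T (x + y) = T x + T y) \<and> (\<forall>c x. T (sm c x) = sm c (T x)) \<and>
       (\<forall>x y. T (x * y) = T y * T x) \<and> T 1 = 1 \<and> (\<forall>v. T (\<iota> v) = \<iota> v))"

definition ntrace :: "(complex \<Rightarrow> 'a::ring_1 \<Rightarrow> 'a) \<Rightarrow> 'a \<Rightarrow> complex" where
  "ntrace sm = (THE \<tau>. (\<forall>x y. \<tau> (x + y) = \<tau> x + \<tau> y) \<and> (\<forall>c x. \<tau> (sm c x) = c * \<tau> x) \<and>
       (\<forall>a b. \<tau> (a * b) = \<tau> (b * a)) \<and> \<tau> 1 = 1)"

definition sigma_product :: "(complex \<Rightarrow> 'a::ring_1 \<Rightarrow> 'a) \<Rightarrow> ('v \<Rightarrow> 'a) \<Rightarrow> ('a \<Rightarrow> 'a)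
    \<Rightarrow> 'a \<Rightarrow> 'a \<Rightarrow> complex" where
  "sigma_product sm \<iota> \<sigma> a b = ntrace sm (\<sigma> (transp sm \<iota> a) * b)"

definition cpos :: "complex \<Rightarrow> bool" where
  "cpos z \<longleftrightarrow> z \<in> \<real> \<and> Re z > 0"

end

theory Submission
  imports Defs
begin

definition fI :: "(nat \<Rightarrow> 'a::ring_1) \<Rightarrow> nat set \<Rightarrow> nat \<Rightarrow> 'a" where
  "fI g I i = (if i \<in> I then g i else 1)"
definition cmono :: "(nat \<Rightarrow> 'a::ring_1) \<Rightarrow> nat \<Rightarrow> nat set \<Rightarrow> 'a" where
  "cmono g n I = prod_list (map (fI g I) [0..<n])"
definition cmonor :: "(nat \<Rightarrow> 'a::ring_1) \<Rightarrow> nat \<Rightarrow> nat set \<Rightarrow> 'a" where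
  "cmonor g n I = prod_list (rev (map (fI g I) [0..<n]))"
definition symd :: "'b set \<Rightarrow> 'b set \<Rightarrow> 'b set" where
  "symd A B = (A - B) \<union> (B - A)"

lemma neg1_comm: "((-1::'a::ring_1) ^ k) * x = x * (-1) ^ k"
  by (induction k) (simp_all add: algebra_simps)

lemma neg1_sq: "((-1::'a::ring_1) ^ k) * (-1) ^ k = 1"
  by (simp add: power_add[symmetric])

lemma neg1_mid: "(x::'a::ring_1) * ((-1) ^ k * y) = (-1) ^ k * (x * y)"
proof -
  have "x * ((-1) ^ k * y) = (x * (-1) ^ k) * y" by (simp add: mult.assoc)
  also have "\<dots> = ((-1) ^ k * x) * y" by (simp only: neg1_comm)
  finally show ?thesis by (simp add: mult.assoc)
qed

lemma prod_list_ones: "(\<forall>i\<in>set L. f i = 1) \<Longrightarrow> prod_list (map f L) = (1::'a::monoid_mult)"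
  by (induction L) auto

locale clb0 =
  fixes \<kappa> :: "complex \<Rightarrow> 'a::ring_1" and n :: nat and g :: "nat \<Rightarrow> 'a" and q :: "nat \<Rightarrow> real"
  assumes k_add: "\<kappa> (x + y) = \<kappa> x + \<kappa> y"
    and k_mult: "\<kappa> (x * y) = \<kappa> x * \<kappa> y"
    and k_one: "\<kappa> 1 = 1"
    and k_comm: "\<kappa> c * z = z * \<kappa> c"
    and g_sq: "i < n \<Longrightarrow> g i * g i = \<kappa> (complex_of_real (q i))"
    and g_anti: "i < n \<Longrightarrow> j < n \<Longrightarrow> i \<noteq> j \<Longrightarrow> g i * g j = - (g j * g i)"
begin

lemma k_zero[simp]: "\<kappa> 0 = 0"
  using k_add[of 0 0] by simp

lemma k_uminus: "\<kappa> (- x) = - \<kappa> x"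
  using k_add[of x "-x"] by (metis add.right_inverse add.inverse_unique k_zero)

lemma k_diff: "\<kappa> (x - y) = \<kappa> x - \<kappa> y"
  using k_add[of x "-y"] k_uminus[of y] by simp

lemma k_sum: "\<kappa> (sum f A) = (\<Sum>a\<in>A. \<kappa> (f a))"
  by (induction A rule: infinite_finite_induct) (simp_all add: k_add)

lemma k_power: "\<kappa> (x ^ k) = \<kappa> x ^ k"
  by (induction k) (simp_all add: k_mult k_one)

lemma k_neg1: "\<kappa> ((-1) ^ k) = (-1) ^ k"
  by (simp add: k_power k_uminus k_one)

lemma k_inj: "\<kappa> c = 0 \<Longrightarrow> c = 0"
proof (rule ccontr)
  assume "\<kappa> c = 0" "c \<noteq> 0"
  then have "\<kappa> c * \<kappa> (inverse c) = 0" by simp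
  then have "\<kappa> (c * inverse c) = 0" by (simp only: k_mult)
  with \<open>c \<noteq> 0\<close> have "\<kappa> 1 = 0" by simp
  then show False by (simp add: k_one)
qed

lemma k_eq_iff: "\<kappa> c = \<kappa> d \<longleftrightarrow> c = d"
  using k_inj[of "c - d"] by (auto simp: k_diff)

lemma k_comm2: "x * (\<kappa> c * y) = \<kappa> c * (x * y)"
  by (metis k_comm mult.assoc)

lemma fI_comm:
  assumes "j < n" "a < n"
  shows "fI g I a * g j = (if a \<in> I \<and> a \<noteq> j then -1 else 1) * (g j * fI g I a)"
  using g_anti[OF assms(2,1)] by (auto simp: fI_def)

lemma list_comm:
  assumes "j < n" "set L \<subseteq> {..<n}"
  shows "prod_list (map (fI g I) L) * g j
     = (-1) ^ length (filter (\<lambda>i. i \<in> I \<and> i \<noteq> j) L) * (g j * prod_list (map (fI g I) L))"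
  using assms(2)
proof (induction L)
  case Nil
  then show ?case by simp
next
  case (Cons a L)
  let ?s = "(-1::'a) ^ length (filter (\<lambda>i. i \<in> I \<and> i \<noteq> j) L)"
  have a: "a < n" using Cons by auto
  have "prod_list (map (fI g I) (a # L)) * g j = fI g I a * (prod_list (map (fI g I) L) * g j)"
    by (simp add: mult.assoc)
  also have "\<dots> = fI g I a * (?s * (g j * prod_list (map (fI g I) L)))"
    using Cons by simp
  also have "\<dots> = ?s * ((fI g I a * g j) * prod_list (map (fI g I) L))"
    by (simp add: neg1_mid mult.assoc)
  also have "\<dots> = ?s * ((if a \<in> I \<and> a \<noteq> j then -1 else 1) * (g j * fI g I a) * prod_list (map (fI g I) L))"
    using fI_comm[OF assms(1) a] by simp
  finally have calc: "prod_list (map (fI g I) (a # L)) * g j = ?s * ((if a \<in> I \<and> a \<noteq> j then -1 else 1) * (g j * fI g I a) * prod_list (map (fI g I) L))" .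
  show ?case
  proof (cases "a \<in> I \<and> a \<noteq> j")
    case True
    have l: "length (filter (\<lambda>i. i \<in> I \<and> i \<noteq> j) (a # L)) = Suc (length (filter (\<lambda>i. i \<in> I \<and> i \<noteq> j) L))"
      using True by simp
    show ?thesis unfolding calc if_P[OF True] l by (simp add: mult.assoc)
  next
    case False
    have l: "length (filter (\<lambda>i. i \<in> I \<and> i \<noteq> j) (a # L)) = length (filter (\<lambda>i. i \<in> I \<and> i \<noteq> j) L)"
      using False by simp
    show ?thesis unfolding calc if_not_P[OF False] l by (simp add: mult.assoc)
  qed
qed

lemma list_comm':
  assumes "j < n" "set L \<subseteq> {..<n}"
  shows "g j * prod_list (map (fI g I) L)
     = (-1) ^ length (filter (\<lambda>i. i \<in> I \<and> i \<noteq> j) L) * (prod_list (map (fI g I) L) * g j)"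
proof -
  let ?s = "(-1::'a) ^ length (filter (\<lambda>i. i \<in> I \<and> i \<noteq> j) L)"
  have "?s * (prod_list (map (fI g I) L) * g j) = ?s * (?s * (g j * prod_list (map (fI g I) L)))"
    by (simp only: list_comm[OF assms, of I])
  also have "\<dots> = g j * prod_list (map (fI g I) L)"
    by (simp only: mult.assoc[symmetric] neg1_sq mult_1_left)
  finally show ?thesis by simp
qed

lemma set_upt_sub: "set [a..<b] \<subseteq> {..<b}"
  by auto

lemma upt_split: "j < n \<Longrightarrow> [0..<n] = [0..<j] @ j # [Suc j..<n]"
proof -
  assume "j < n"
  then have "[0..<n] = [0..<j] @ [j..<n]" using upt_add_eq_append[of 0 j "n-j"] by simp
  then show ?thesis using \<open>j < n\<close> upt_conv_Cons by simp
qed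

definition eps :: "nat set \<Rightarrow> nat \<Rightarrow> complex" where
  "eps I j = (-1) ^ (length (filter (\<lambda>i. i \<in> I) [Suc j..<n])) *
     (if j \<in> I then complex_of_real (q j) else 1)"

lemma eps_real: "cnj (eps I j) = eps I j"
  by (simp add: eps_def)

lemma fI_symd: "i \<noteq> j \<Longrightarrow> fI g (symd I {j}) i = fI g I i"
  by (auto simp: fI_def symd_def)

lemma cmono_g:
  assumes "j < n"
  shows "cmono g n I * g j = \<kappa> (eps I j) * cmono g n (symd I {j})"
proof -
  let ?f = "fI g I" and ?f' = "fI g (symd I {j})"
  let ?A = "prod_list (map ?f [0..<j])" and ?C = "prod_list (map ?f [Suc j..<n])"
  let ?k = "length (filter (\<lambda>i. i \<in> I) [Suc j..<n])"
  have A: "prod_list (map ?f' [0..<j]) = ?A"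
    by (rule arg_cong[where f=prod_list], rule map_cong) (auto simp: fI_symd)
  have C: "prod_list (map ?f' [Suc j..<n]) = ?C"
    by (rule arg_cong[where f=prod_list], rule map_cong) (auto simp: fI_symd)
  have filt: "filter (\<lambda>i. i \<in> I \<and> i \<noteq> j) [Suc j..<n] = filter (\<lambda>i. i \<in> I) [Suc j..<n]"
    by (rule filter_cong) auto
  have Cg: "?C * g j = (-1) ^ ?k * (g j * ?C)"
    using list_comm[OF assms set_upt_sub, of I] filt by simp
  have "cmono g n I * g j = ?A * ?f j * (?C * g j)"
    unfolding cmono_def using upt_split[OF assms] by (simp add: mult.assoc)
  also have "\<dots> = (-1) ^ ?k * (?A * (?f j * g j) * ?C)"
    unfolding Cg by (simp add: neg1_mid mult.assoc)
  also have "\<dots> = \<kappa> (eps I j) * cmono g n (symd I {j})"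
  proof (cases "j \<in> I")
    case True
    then have "?f j * g j = \<kappa> (complex_of_real (q j))" using g_sq[OF assms] by (simp add: fI_def)
    moreover have "?f' j = 1" using True by (simp add: fI_def symd_def)
    moreover have "cmono g n (symd I {j}) = prod_list (map ?f' [0..<j]) * ?f' j * prod_list (map ?f' [Suc j..<n])"
      unfolding cmono_def using upt_split[OF assms] by (simp add: mult.assoc)
    ultimately show ?thesis using True A C
      by (simp add: eps_def k_mult k_neg1 k_comm2 mult.assoc)
  next
    case False
    then have "?f j * g j = g j" by (simp add: fI_def)
    moreover have "?f' j = g j" using False by (simp add: fI_def symd_def)
    moreover have "cmono g n (symd I {j}) = prod_list (map ?f' [0..<j]) * ?f' j * prod_list (map ?f' [Suc j..<n])"
      unfolding cmono_def using upt_split[OF assms] by (simp add: mult.assoc)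
    ultimately show ?thesis using False A C
      by (simp add: eps_def k_neg1 k_one mult.assoc)
  qed
  finally show ?thesis .
qed

lemma g_cmonor:
  assumes "j < n"
  shows "g j * cmonor g n I = \<kappa> (eps I j) * cmonor g n (symd I {j})"
proof -
  let ?f = "fI g I" and ?f' = "fI g (symd I {j})"
  let ?A = "prod_list (map ?f (rev [0..<j]))" and ?C = "prod_list (map ?f (rev [Suc j..<n]))"
  let ?k = "length (filter (\<lambda>i. i \<in> I) [Suc j..<n])"
  have A: "prod_list (map ?f' (rev [0..<j])) = ?A"
    by (rule arg_cong[where f=prod_list], rule map_cong) (auto simp: fI_symd)
  have C: "prod_list (map ?f' (rev [Suc j..<n])) = ?C"
    by (rule arg_cong[where f=prod_list], rule map_cong) (auto simp: fI_symd)
  have filt: "length (filter (\<lambda>i. i \<in> I \<and> i \<noteq> j) (rev [Suc j..<n])) = ?k"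
  proof -
    have "filter (\<lambda>i. i \<in> I \<and> i \<noteq> j) [Suc j..<n] = filter (\<lambda>i. i \<in> I) [Suc j..<n]"
      by (rule filter_cong) auto
    then show ?thesis by (metis length_rev rev_filter)
  qed
  have Cg: "g j * ?C = (-1) ^ ?k * (?C * g j)"
    using list_comm'[OF assms, of "rev [Suc j..<n]" I] filt set_upt_sub[of "Suc j" n] by simp
  have split: "\<And>J. cmonor g n J = prod_list (map (fI g J) (rev [Suc j..<n])) * fI g J j * prod_list (map (fI g J) (rev [0..<j]))"
    unfolding cmonor_def using upt_split[OF assms] by (simp add: rev_map mult.assoc)
  have gf: "\<And>X. g j * (?f j * X) = ?f j * (g j * X)" by (simp add: fI_def)
  have "g j * cmonor g n I = (g j * ?C) * ?f j * ?A"
    unfolding split by (simp add: mult.assoc)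
  also have "\<dots> = (-1) ^ ?k * (?C * (?f j * g j) * ?A)"
    unfolding Cg by (simp add: mult.assoc gf)
  also have "\<dots> = \<kappa> (eps I j) * cmonor g n (symd I {j})"
  proof (cases "j \<in> I")
    case True
    then have "?f j * g j = \<kappa> (complex_of_real (q j))" using g_sq[OF assms] by (simp add: fI_def)
    moreover have "?f' j = 1" using True by (simp add: fI_def symd_def)
    ultimately show ?thesis using True A C split[of "symd I {j}"]
      by (simp add: eps_def k_mult k_neg1 k_comm2 mult.assoc)
  next
    case False
    then have "?f j * g j = g j" by (simp add: fI_def)
    moreover have "?f' j = g j" using False by (simp add: fI_def symd_def)
    ultimately show ?thesis using False A C split[of "symd I {j}"]
      by (simp add: eps_def k_neg1 k_one mult.assoc)
  qed
  finally show ?thesis .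
qed

lemma cmono_empty[simp]: "cmono g n {} = 1"
  unfolding cmono_def by (rule prod_list_ones) (simp add: fI_def)

lemma cmonor_empty[simp]: "cmonor g n {} = 1"
  unfolding cmonor_def rev_map by (rule prod_list_ones) (simp add: fI_def)

lemma cmono_single: "j < n \<Longrightarrow> cmono g n {j} = g j"
  using cmono_g[of j "{}"] by (simp add: symd_def eps_def k_one)

lemma cmonor_single: "j < n \<Longrightarrow> cmonor g n {j} = g j"
  using g_cmonor[of j "{}"] by (simp add: symd_def eps_def k_one)

lemma word_fI: "prod_list (map (fI g J) L) = prod_list (map g (filter (\<lambda>i. i \<in> J) L))"
  by (induction L) (auto simp: fI_def)

lemma word_fI_rev: "prod_list (rev (map (fI g J) L)) = prod_list (map g (rev (filter (\<lambda>i. i \<in> J) L)))"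
  by (induction L) (auto simp: fI_def)

lemma cmono_word:
  assumes "distinct L" "set L \<subseteq> {..<n}"
  shows "\<exists>e. cmono g n I * prod_list (map g L) = \<kappa> e * cmono g n (symd I (set L))"
  using assms
proof (induction L rule: rev_induct)
  case Nil
  show ?case by (auto intro!: exI[of _ 1] simp: k_one symd_def)
next
  case (snoc j L)
  then obtain e where e: "cmono g n I * prod_list (map g L) = \<kappa> e * cmono g n (symd I (set L))"
    by auto
  have j: "j < n" "j \<notin> set L" using snoc.prems by auto
  have "cmono g n I * prod_list (map g (L @ [j])) = (cmono g n I * prod_list (map g L)) * g j"
    by (simp add: mult.assoc)
  also have "\<dots> = \<kappa> e * (cmono g n (symd I (set L)) * g j)" unfolding e by (simp add: mult.assoc)
  also have "\<dots> = \<kappa> (e * eps (symd I (set L)) j) * cmono g n (symd (symd I (set L)) {j})"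
    unfolding cmono_g[OF j(1)] by (simp add: k_mult mult.assoc)
  also have "symd (symd I (set L)) {j} = symd I (set (L @ [j]))"
    using j(2) by (auto simp: symd_def)
  finally have eq: "cmono g n I * prod_list (map g (L @ [j])) =
      \<kappa> (e * eps (symd I (set L)) j) * cmono g n (symd I (set (L @ [j])))" .
  show ?case by (rule exI[where x="e * eps (symd I (set L)) j"], rule eq)
qed

lemma set_filter_upt: "J \<subseteq> {..<n} \<Longrightarrow> set (filter (\<lambda>i. i \<in> J) [0..<n]) = J"
  by auto

lemma cmono_mult:
  assumes "J \<subseteq> {..<n}"
  shows "\<exists>e. cmono g n I * cmono g n J = \<kappa> e * cmono g n (symd I J)"
proof -
  have "distinct (filter (\<lambda>i. i \<in> J) [0..<n])" "set (filter (\<lambda>i. i \<in> J) [0..<n]) \<subseteq> {..<n}"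
    by auto
  from cmono_word[OF this, of I] show ?thesis
    unfolding cmono_def[of g n J] word_fI set_filter_upt[OF assms] .
qed

lemma cmonor_eq:
  assumes "J \<subseteq> {..<n}"
  shows "\<exists>e. cmonor g n J = \<kappa> e * cmono g n J"
proof -
  have "set (rev (filter (\<lambda>i. i \<in> J) [0..<n])) = J" using assms by auto
  then show ?thesis
    using cmono_word[of "rev (filter (\<lambda>i. i \<in> J) [0..<n])" "{}"] assms
    unfolding cmonor_def[of g n J] word_fI_rev by (simp add: symd_def)
qed

lemma cmonor_mult:
  assumes "I \<subseteq> {..<n}" "J \<subseteq> {..<n}"
  shows "\<exists>e. cmonor g n I * cmono g n J = \<kappa> e * cmono g n (symd I J)"
proof -
  obtain e where e: "cmonor g n I = \<kappa> e * cmono g n I" using cmonor_eq[OF assms(1)] by blast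
  obtain e' where e': "cmono g n I * cmono g n J = \<kappa> e' * cmono g n (symd I J)"
    using cmono_mult[OF assms(2)] by blast
  have "cmonor g n I * cmono g n J = \<kappa> (e * e') * cmono g n (symd I J)"
    unfolding e mult.assoc e' by (simp add: k_mult mult.assoc)
  then show ?thesis by (rule exI)
qed

lemma cmono_comm:
  assumes "j < n" "K \<subseteq> {..<n}"
  shows "cmono g n K * g j = (-1) ^ card (K - {j}) * (g j * cmono g n K)"
proof -
  have "length (filter (\<lambda>i. i \<in> K \<and> i \<noteq> j) [0..<n]) = card ({i. i \<in> K \<and> i \<noteq> j} \<inter> set [0..<n])"
    by (rule distinct_length_filter) simp
  also have "{i. i \<in> K \<and> i \<noteq> j} \<inter> set [0..<n] = K - {j}" using assms(2) by auto
  finally show ?thesis using list_comm[OF assms(1) set_upt_sub[of 0 n], of K] unfolding cmono_def by simp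
qed

lemma prod_list_hom:
  assumes "\<And>x y. h (x * y) = h x * h y" "h 1 = 1"
  shows "h (prod_list xs) = prod_list (map h xs)"
  by (induction xs) (simp_all add: assms)

end


lemma additive_sum:
  fixes F :: "'a::ab_group_add \<Rightarrow> 'b::ab_group_add"
  assumes "\<And>x y. F (x + y) = F x + F y"
  shows "F (sum f A) = (\<Sum>a\<in>A. F (f a))"
proof -
  have F0: "F 0 = 0" using assms[of 0 0] by simp
  show ?thesis by (induction A rule: infinite_finite_induct) (simp_all add: F0 assms)
qed

locale clb = clb0 +
  assumes spans: "\<exists>c. x = (\<Sum>I\<in>Pow {..<n}. \<kappa> (c I) * cmono g n I)"
    and indep: "(\<Sum>I\<in>Pow {..<n}. \<kappa> (c I) * cmono g n I) = 0 \<Longrightarrow> I \<subseteq> {..<n} \<Longrightarrow> c I = 0"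
    and q_nz: "i < n \<Longrightarrow> q i \<noteq> 0"
    and n_even: "even n"
begin

abbreviation "PP \<equiv> Pow {..<n}"
abbreviation "mo I \<equiv> cmono g n I"
abbreviation "mr I \<equiv> cmonor g n I"

definition coord :: "'a \<Rightarrow> nat set \<Rightarrow> complex" where
  "coord x = (SOME c. x = (\<Sum>I\<in>PP. \<kappa> (c I) * mo I))"

lemma expand: "x = (\<Sum>I\<in>PP. \<kappa> (coord x I) * mo I)"
  unfolding coord_def by (rule someI_ex[OF spans])

lemma coord_unique:
  assumes "x = (\<Sum>I\<in>PP. \<kappa> (c I) * mo I)" "I \<in> PP"
  shows "coord x I = c I"
proof -
  have AB: "(\<Sum>I\<in>PP. \<kappa> (coord x I) * mo I) = (\<Sum>I\<in>PP. \<kappa> (c I) * mo I)"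
    by (rule trans[OF sym[OF expand[of x]] assms(1)])
  have "(\<Sum>I\<in>PP. \<kappa> (coord x I - c I) * mo I)
      = (\<Sum>I\<in>PP. \<kappa> (coord x I) * mo I) - (\<Sum>I\<in>PP. \<kappa> (c I) * mo I)"
    by (simp add: k_diff left_diff_distrib sum_subtractf)
  also have "\<dots> = 0" unfolding AB by simp
  finally have "(\<Sum>I\<in>PP. \<kappa> (coord x I - c I) * mo I) = 0" .
  from indep[OF this] assms(2) show ?thesis by simp
qed

lemma coord_add: "I \<in> PP \<Longrightarrow> coord (x + y) I = coord x I + coord y I"
proof (rule coord_unique)
  have "x + y = (\<Sum>I\<in>PP. \<kappa> (coord x I) * mo I) + (\<Sum>I\<in>PP. \<kappa> (coord y I) * mo I)"
    by (rule arg_cong2[where f="(+)"], rule expand, rule expand)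
  also have "\<dots> = (\<Sum>I\<in>PP. \<kappa> (coord x I + coord y I) * mo I)"
    by (simp add: sum.distrib k_add distrib_right)
  finally show "x + y = (\<Sum>I\<in>PP. \<kappa> (coord x I + coord y I) * mo I)" .
qed

lemma coord_scale: "I \<in> PP \<Longrightarrow> coord (\<kappa> c * x) I = c * coord x I"
proof (rule coord_unique)
  have "\<kappa> c * x = \<kappa> c * (\<Sum>I\<in>PP. \<kappa> (coord x I) * mo I)"
    by (rule arg_cong[where f="\<lambda>z. \<kappa> c * z"], rule expand)
  also have "\<dots> = (\<Sum>I\<in>PP. \<kappa> (c * coord x I) * mo I)"
    by (simp add: sum_distrib_left k_mult mult.assoc)
  finally show "\<kappa> c * x = (\<Sum>I\<in>PP. \<kappa> (c * coord x I) * mo I)" .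
qed

lemma mo_delta: "J \<in> PP \<Longrightarrow> mo J = (\<Sum>I\<in>PP. \<kappa> (if I = J then 1 else 0) * mo I)"
proof -
  assume J: "J \<in> PP"
  have "(\<Sum>I\<in>PP. \<kappa> (if I = J then 1 else 0) * mo I) = (\<Sum>I\<in>PP. if I = J then mo I else 0)"
    by (rule sum.cong) (simp_all add: k_one)
  also have "\<dots> = mo J" using J by simp
  finally show ?thesis by simp
qed

lemma coord_mo: "J \<in> PP \<Longrightarrow> I \<in> PP \<Longrightarrow> coord (mo J) I = (if I = J then 1 else 0)"
  by (rule coord_unique[OF mo_delta])

lemma decompC:
  fixes F :: "'a \<Rightarrow> complex"
  assumes "\<And>x y. F (x + y) = F x + F y" "\<And>c x. F (\<kappa> c * x) = h c * F x"
  shows "F x = (\<Sum>I\<in>PP. h (coord x I) * F (mo I))"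
proof -
  have "F x = F (\<Sum>I\<in>PP. \<kappa> (coord x I) * mo I)" by (subst expand[of x]) (rule refl)
  also have "\<dots> = (\<Sum>I\<in>PP. F (\<kappa> (coord x I) * mo I))" by (rule additive_sum[OF assms(1)])
  also have "\<dots> = (\<Sum>I\<in>PP. h (coord x I) * F (mo I))" by (simp add: assms(2))
  finally show ?thesis .
qed

lemma decompA:
  fixes F :: "'a \<Rightarrow> 'a"
  assumes "\<And>x y. F (x + y) = F x + F y" "\<And>c x. F (\<kappa> c * x) = \<kappa> (h c) * F x"
  shows "F x = (\<Sum>I\<in>PP. \<kappa> (h (coord x I)) * F (mo I))"
proof -
  have "F x = F (\<Sum>I\<in>PP. \<kappa> (coord x I) * mo I)" by (subst expand[of x]) (rule refl)
  also have "\<dots> = (\<Sum>I\<in>PP. F (\<kappa> (coord x I) * mo I))" by (rule additive_sum[OF assms(1)])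
  also have "\<dots> = (\<Sum>I\<in>PP. \<kappa> (h (coord x I)) * F (mo I))" by (simp add: assms(2))
  finally show ?thesis .
qed

lemma nonzero_coord: "x \<noteq> 0 \<Longrightarrow> \<exists>I\<in>PP. coord x I \<noteq> 0"
proof (rule ccontr)
  assume "x \<noteq> 0" "\<not> (\<exists>I\<in>PP. coord x I \<noteq> 0)"
  then have "(\<Sum>I\<in>PP. \<kappa> (coord x I) * mo I) = 0" by simp
  with expand[of x] \<open>x \<noteq> 0\<close> show False by simp
qed

subsection \<open>Trace\<close>

definition tau :: "'a \<Rightarrow> complex" where "tau x = coord x {}"

lemma tau_add: "tau (x + y) = tau x + tau y"
  unfolding tau_def by (rule coord_add) simp

lemma tau_scale: "tau (\<kappa> c * x) = c * tau x"
  unfolding tau_def by (rule coord_scale) simp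

lemma tau_scale_r: "tau (x * \<kappa> c) = c * tau x"
  by (simp add: k_comm[symmetric] tau_scale)

lemma tau_sum: "tau (sum f A) = (\<Sum>a\<in>A. tau (f a))"
  by (rule additive_sum) (rule tau_add)

lemma tau_mo: "K \<in> PP \<Longrightarrow> tau (mo K) = (if K = {} then 1 else 0)"
  unfolding tau_def by (subst coord_mo) auto

lemma tau_k: "tau (\<kappa> c) = c"
  using tau_scale[of c 1] tau_mo[of "{}"] by simp

lemma tau_uminus: "tau (- x) = - tau x"
  using tau_scale[of "-1" x] by (simp add: k_uminus k_one)

lemma symd_PP: "I \<in> PP \<Longrightarrow> J \<in> PP \<Longrightarrow> symd I J \<in> PP"
  by (auto simp: symd_def)

lemma tau_mo_g:
  assumes I: "I \<in> PP" and j: "j < n"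
  shows "tau (mo I * g j) = tau (g j * mo I)"
proof (cases "even (card (I - {j}))")
  case True
  then show ?thesis using cmono_comm[OF j] I by simp
next
  case False
  then have c: "mo I * g j = - (g j * mo I)" using cmono_comm[OF j] I by simp
  have "symd I {j} \<noteq> {}"
  proof
    assume "symd I {j} = {}"
    then have "I = {j}" by (auto simp: symd_def)
    with False show False by simp
  qed
  then have z: "tau (mo I * g j) = 0"
    unfolding cmono_g[OF j] tau_scale using tau_mo[OF symd_PP[OF I], of "{j}"] j by simp
  have "g j * mo I = - (mo I * g j)" using c by simp
  then show ?thesis using z by (simp add: tau_uminus)
qed

lemma tau_g_comm:
  assumes j: "j < n"
  shows "tau (x * g j) = tau (g j * x)"
proof -
  have "tau (x * g j) = (\<Sum>I\<in>PP. coord x I * tau (mo I * g j))"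
    by (rule decompC[where F="\<lambda>z. tau (z * g j)"]) (simp_all add: distrib_right tau_add mult.assoc tau_scale)
  also have "\<dots> = (\<Sum>I\<in>PP. coord x I * tau (g j * mo I))"
    using tau_mo_g[OF _ j] by simp
  also have "\<dots> = tau (g j * x)"
    by (rule decompC[where F="\<lambda>z. tau (g j * z)", symmetric]) (simp_all add: distrib_left tau_add k_comm2 tau_scale)
  finally show ?thesis .
qed

lemma tau_cyclic: "tau (x * y) = tau (y * x)"
proof -
  define P where "P u \<longleftrightarrow> (\<forall>z. tau (z * u) = tau (u * z))" for u
  have P1: "P 1" by (simp add: P_def)
  have Pm: "P (u * v)" if "P u" "P v" for u v
  proof -
    have "tau (z * (u * v)) = tau ((u * v) * z)" for z
    proof -
      have "tau (z * (u * v)) = tau ((z * u) * v)" by (simp add: mult.assoc)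
      also have "\<dots> = tau (v * (z * u))" using that(2) by (simp add: P_def)
      also have "\<dots> = tau ((v * z) * u)" by (simp add: mult.assoc)
      also have "\<dots> = tau (u * (v * z))" using that(1) by (simp add: P_def)
      finally show ?thesis by (simp add: mult.assoc)
    qed
    then show ?thesis by (simp add: P_def)
  qed
  have Pf: "P (fI g I i)" if "i < n" for I i
    using tau_g_comm[OF that] P1 by (auto simp: P_def fI_def)
  have Pl: "set L \<subseteq> {..<n} \<Longrightarrow> P (prod_list (map (fI g I) L))" for L I
    by (induction L) (auto intro: P1 Pm Pf)
  have Pmo: "P (mo I)" for I unfolding cmono_def by (rule Pl) auto
  have "tau (x * y) = (\<Sum>I\<in>PP. coord y I * tau (x * mo I))"
    by (rule decompC[where F="\<lambda>z. tau (x * z)"]) (simp_all add: distrib_left tau_add k_comm2 tau_scale)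
  also have "\<dots> = (\<Sum>I\<in>PP. coord y I * tau (mo I * x))"
    using Pmo by (simp add: P_def)
  also have "\<dots> = tau (y * x)"
    by (rule decompC[where F="\<lambda>z. tau (z * x)", symmetric]) (simp_all add: distrib_right tau_add mult.assoc tau_scale)
  finally show ?thesis .
qed

lemma tau_gg: "i < n \<Longrightarrow> j < n \<Longrightarrow> tau (g i * g j) = (if i = j then complex_of_real (q j) else 0)"
proof -
  assume ij: "i < n" "j < n"
  show ?thesis
  proof (cases "i = j")
    case True
    then show ?thesis using g_sq[OF ij(2)] tau_k by simp
  next
    case False
    have "tau (g i * g j) = eps {i} j * tau (mo (symd {i} {j}))"
      using cmono_g[OF ij(2), of "{i}"] cmono_single[OF ij(1)] by (simp add: tau_scale)
    also have "\<dots> = 0"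
      using False ij by (subst tau_mo) (auto simp: symd_def)
    finally show ?thesis using False by simp
  qed
qed

lemma coef_extract:
  assumes j: "j < n"
  shows "tau ((\<Sum>i<n. \<kappa> (a i) * g i) * g j) = a j * complex_of_real (q j)"
proof -
  have "tau ((\<Sum>i<n. \<kappa> (a i) * g i) * g j) = (\<Sum>i<n. a i * tau (g i * g j))"
    by (simp add: sum_distrib_right tau_sum mult.assoc tau_scale)
  also have "\<dots> = (\<Sum>i<n. if i = j then a j * complex_of_real (q j) else 0)"
    by (rule sum.cong) (simp_all add: tau_gg j)
  also have "\<dots> = a j * complex_of_real (q j)" using j by simp
  finally show ?thesis .
qed

end


context clb begin

lemma trace_unique:
  fixes t :: "'a \<Rightarrow> complex"
  assumes tadd: "\<And>x y. t (x + y) = t x + t y"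
    and tscale: "\<And>c x. t (\<kappa> c * x) = c * t x"
    and tcyc: "\<And>a b. t (a * b) = t (b * a)"
    and tone: "t 1 = 1"
  shows "t x = tau x"
proof -
  have t0: "t 0 = 0" using tadd[of 0 0] by simp
  have tneg: "t (- x) = - t x" for x
  proof -
    have "t x + t (- x) = 0" using tadd[of x "-x"] t0 by simp
    then show ?thesis by (rule sym[OF add.inverse_unique])
  qed
  have tscale_r: "t (x * \<kappa> c) = c * t x" for x c
    by (simp add: k_comm[symmetric] tscale)
  have tmo: "t (mo K) = (if K = {} then 1 else 0)" if K: "K \<in> PP" for K
  proof (cases "K = {}")
    case True
    then show ?thesis using tone by simp
  next
    case False
    have "\<exists>j<n. odd (card (K - {j}))"
    proof (cases "even (card K)")
      case True
      from False obtain j where j: "j \<in> K" by auto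
      then have "j < n" using K by auto
      moreover have "card (K - {j}) = card K - 1" using j K by (simp add: finite_subset)
      moreover have "card K > 0" using j K by (auto simp: card_gt_0_iff intro: finite_subset)
      ultimately show ?thesis using True by (intro exI[of _ j]) auto
    next
      case odd: False
      have "card K \<le> card {..<n}" using K by (intro card_mono) auto
      moreover have "card K \<noteq> n" using odd n_even by auto
      ultimately have "card K < card {..<n}" by simp
      then have "K \<noteq> {..<n}" by auto
      then obtain j where "j < n" "j \<notin> K" using K by auto
      then show ?thesis using odd by (intro exI[of _ j]) auto
    qed
    then obtain j where j: "j < n" "odd (card (K - {j}))" by auto
    have c: "mo K * g j = - (g j * mo K)" using cmono_comm[OF j(1)] K j(2) by simp
    have "complex_of_real (q j) * t (mo K) = t (mo K * (g j * g j))"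
      using g_sq[OF j(1)] by (simp add: tscale_r)
    also have "\<dots> = t (g j * (mo K * g j))" using tcyc[of "mo K * g j" "g j"] by (simp add: mult.assoc)
    also have "\<dots> = - t (g j * g j * mo K)" unfolding c by (simp add: tneg mult.assoc)
    also have "\<dots> = - (complex_of_real (q j) * t (mo K))" using g_sq[OF j(1)] by (simp add: tscale)
    finally have "complex_of_real (q j) * t (mo K) = 0" by simp
    then show ?thesis using q_nz[OF j(1)] False by simp
  qed
  have "t x = (\<Sum>I\<in>PP. coord x I * t (mo I))"
    by (rule decompC) (simp_all add: tadd tscale)
  also have "\<dots> = (\<Sum>I\<in>PP. if I = {} then coord x I else 0)"
    by (rule sum.cong) (simp_all add: tmo)
  also have "\<dots> = tau x" by (simp add: tau_def)
  finally show ?thesis .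
qed

subsection \<open>Transpose\<close>

definition T0 :: "'a \<Rightarrow> 'a" where "T0 x = (\<Sum>I\<in>PP. \<kappa> (coord x I) * mr I)"

lemma T0_add: "T0 (x + y) = T0 x + T0 y"
proof -
  have "T0 (x + y) = (\<Sum>I\<in>PP. \<kappa> (coord x I + coord y I) * mr I)"
    unfolding T0_def by (rule sum.cong) (simp_all add: coord_add)
  then show ?thesis unfolding T0_def by (simp add: k_add distrib_right sum.distrib)
qed

lemma T0_scale: "T0 (\<kappa> c * x) = \<kappa> c * T0 x"
proof -
  have "T0 (\<kappa> c * x) = (\<Sum>I\<in>PP. \<kappa> (c * coord x I) * mr I)"
    unfolding T0_def by (rule sum.cong) (simp_all add: coord_scale)
  then show ?thesis unfolding T0_def by (simp add: k_mult sum_distrib_left mult.assoc)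
qed

lemma T0_mo: "K \<in> PP \<Longrightarrow> T0 (mo K) = mr K"
proof -
  assume K: "K \<in> PP"
  have "T0 (mo K) = (\<Sum>I\<in>PP. if I = K then mr I else 0)"
    unfolding T0_def by (rule sum.cong) (auto simp: coord_mo[OF K] k_one)
  also have "\<dots> = mr K" using K by simp
  finally show ?thesis .
qed

lemma T0_one: "T0 1 = 1"
  using T0_mo[of "{}"] by simp

lemma T0_single: "j < n \<Longrightarrow> T0 (g j) = g j"
  using T0_mo[of "{j}"] cmono_single cmonor_single by simp

lemma T0_g:
  assumes j: "j < n"
  shows "T0 (x * g j) = g j * T0 x"
proof -
  have "T0 (x * g j) = (\<Sum>I\<in>PP. \<kappa> (coord x I) * T0 (mo I * g j))"
    by (rule decompA[where F="\<lambda>z. T0 (z * g j)" and h="\<lambda>c. c"])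
       (simp_all add: distrib_right T0_add mult.assoc T0_scale)
  also have "\<dots> = (\<Sum>I\<in>PP. \<kappa> (coord x I) * (g j * T0 (mo I)))"
  proof (rule sum.cong)
    fix I assume I: "I \<in> PP"
    have "T0 (mo I * g j) = \<kappa> (eps I j) * mr (symd I {j})"
      unfolding cmono_g[OF j] T0_scale using T0_mo[OF symd_PP[OF I], of "{j}"] j by simp
    also have "\<dots> = g j * T0 (mo I)" using g_cmonor[OF j] T0_mo[OF I] by simp
    finally show "\<kappa> (coord x I) * T0 (mo I * g j) = \<kappa> (coord x I) * (g j * T0 (mo I))" by simp
  qed simp
  also have "\<dots> = g j * T0 x"
    by (rule decompA[where F="\<lambda>z. g j * T0 z" and h="\<lambda>c. c", symmetric])
       (simp_all add: distrib_left T0_add k_comm2 T0_scale)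
  finally show ?thesis .
qed

lemma T0_anti: "T0 (x * y) = T0 y * T0 x"
proof -
  define P where "P u \<longleftrightarrow> (\<forall>z. T0 (z * u) = T0 u * T0 z)" for u
  have P1: "P 1" by (simp add: P_def T0_one)
  have Pm: "P (u * v)" if "P u" "P v" for u v
  proof -
    have uv: "T0 (u * v) = T0 v * T0 u" using that(2) by (simp add: P_def)
    have "T0 (z * (u * v)) = T0 (u * v) * T0 z" for z
    proof -
      have "T0 (z * (u * v)) = T0 ((z * u) * v)" by (simp add: mult.assoc)
      also have "\<dots> = T0 v * T0 (z * u)" using that(2) by (simp add: P_def)
      also have "\<dots> = T0 v * (T0 u * T0 z)" using that(1) by (simp add: P_def)
      finally show ?thesis by (simp add: uv mult.assoc)
    qed
    then show ?thesis by (simp add: P_def)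
  qed
  have Pf: "P (fI g I i)" if "i < n" for I i
    using T0_g[OF that] T0_single[OF that] P1 by (auto simp: P_def fI_def)
  have Pl: "set L \<subseteq> {..<n} \<Longrightarrow> P (prod_list (map (fI g I) L))" for L I
    by (induction L) (auto intro: P1 Pm Pf)
  have Pmo: "P (mo I)" for I unfolding cmono_def by (rule Pl) auto
  have "T0 (x * y) = (\<Sum>I\<in>PP. \<kappa> (coord y I) * T0 (x * mo I))"
    by (rule decompA[where F="\<lambda>z. T0 (x * z)" and h="\<lambda>c. c"])
       (simp_all add: distrib_left T0_add k_comm2 T0_scale)
  also have "\<dots> = (\<Sum>I\<in>PP. \<kappa> (coord y I) * (T0 (mo I) * T0 x))"
    using Pmo by (simp add: P_def)
  also have "\<dots> = T0 y * T0 x"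
    by (rule decompA[where F="\<lambda>z. T0 z * T0 x" and h="\<lambda>c. c", symmetric])
       (simp_all add: distrib_right T0_add mult.assoc T0_scale)
  finally show ?thesis .
qed

subsection \<open>Conjugation\<close>

definition C0 :: "'a \<Rightarrow> 'a" where "C0 x = (\<Sum>I\<in>PP. \<kappa> (cnj (coord x I)) * mo I)"

lemma C0_add: "C0 (x + y) = C0 x + C0 y"
proof -
  have "C0 (x + y) = (\<Sum>I\<in>PP. \<kappa> (cnj (coord x I) + cnj (coord y I)) * mo I)"
    unfolding C0_def by (rule sum.cong) (simp_all add: coord_add)
  then show ?thesis unfolding C0_def by (simp add: k_add distrib_right sum.distrib)
qed

lemma C0_scale: "C0 (\<kappa> c * x) = \<kappa> (cnj c) * C0 x"
proof -
  have "C0 (\<kappa> c * x) = (\<Sum>I\<in>PP. \<kappa> (cnj c * cnj (coord x I)) * mo I)"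
    unfolding C0_def by (rule sum.cong) (simp_all add: coord_scale)
  then show ?thesis unfolding C0_def by (simp add: k_mult sum_distrib_left mult.assoc)
qed

lemma C0_mo: "K \<in> PP \<Longrightarrow> C0 (mo K) = mo K"
proof -
  assume K: "K \<in> PP"
  have "C0 (mo K) = (\<Sum>I\<in>PP. if I = K then mo I else 0)"
    unfolding C0_def by (rule sum.cong) (auto simp: coord_mo[OF K] k_one)
  also have "\<dots> = mo K" using K by simp
  finally show ?thesis .
qed

lemma C0_one: "C0 1 = 1"
  using C0_mo[of "{}"] by simp

lemma C0_single: "j < n \<Longrightarrow> C0 (g j) = g j"
  using C0_mo[of "{j}"] cmono_single by simp

lemma C0_g:
  assumes j: "j < n"
  shows "C0 (x * g j) = C0 x * g j"
proof -
  have "C0 (x * g j) = (\<Sum>I\<in>PP. \<kappa> (cnj (coord x I)) * C0 (mo I * g j))"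
    by (rule decompA[where F="\<lambda>z. C0 (z * g j)" and h="cnj"])
       (simp_all add: distrib_right C0_add mult.assoc C0_scale)
  also have "\<dots> = (\<Sum>I\<in>PP. \<kappa> (cnj (coord x I)) * (C0 (mo I) * g j))"
  proof (rule sum.cong)
    fix I assume I: "I \<in> PP"
    have "C0 (mo I * g j) = \<kappa> (eps I j) * mo (symd I {j})"
      unfolding cmono_g[OF j] C0_scale eps_real using C0_mo[OF symd_PP[OF I], of "{j}"] j by simp
    also have "\<dots> = C0 (mo I) * g j" using cmono_g[OF j] C0_mo[OF I] by simp
    finally show "\<kappa> (cnj (coord x I)) * C0 (mo I * g j) = \<kappa> (cnj (coord x I)) * (C0 (mo I) * g j)" by simp
  qed simp
  also have "\<dots> = C0 x * g j"
    by (rule decompA[where F="\<lambda>z. C0 z * g j" and h="cnj", symmetric])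
       (simp_all add: distrib_right C0_add mult.assoc C0_scale)
  finally show ?thesis .
qed

lemma C0_mult: "C0 (x * y) = C0 x * C0 y"
proof -
  define P where "P u \<longleftrightarrow> (\<forall>z. C0 (z * u) = C0 z * C0 u)" for u
  have P1: "P 1" by (simp add: P_def C0_one)
  have Pm: "P (u * v)" if "P u" "P v" for u v
  proof -
    have uv: "C0 (u * v) = C0 u * C0 v" using that(2) by (simp add: P_def)
    have "C0 (z * (u * v)) = C0 z * C0 (u * v)" for z
    proof -
      have "C0 (z * (u * v)) = C0 ((z * u) * v)" by (simp add: mult.assoc)
      also have "\<dots> = C0 (z * u) * C0 v" using that(2) by (simp add: P_def)
      also have "\<dots> = C0 z * C0 u * C0 v" using that(1) by (simp add: P_def)
      finally show ?thesis by (simp add: uv mult.assoc)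
    qed
    then show ?thesis by (simp add: P_def)
  qed
  have Pf: "P (fI g I i)" if "i < n" for I i
    using C0_g[OF that] C0_single[OF that] P1 by (auto simp: P_def fI_def)
  have Pl: "set L \<subseteq> {..<n} \<Longrightarrow> P (prod_list (map (fI g I) L))" for L I
    by (induction L) (auto intro: P1 Pm Pf)
  have Pmo: "P (mo I)" for I unfolding cmono_def by (rule Pl) auto
  have "C0 (x * y) = (\<Sum>I\<in>PP. \<kappa> (cnj (coord y I)) * C0 (x * mo I))"
    by (rule decompA[where F="\<lambda>z. C0 (x * z)" and h="cnj"])
       (simp_all add: distrib_left C0_add k_comm2 C0_scale)
  also have "\<dots> = (\<Sum>I\<in>PP. \<kappa> (cnj (coord y I)) * (C0 x * C0 (mo I)))"
    using Pmo by (simp add: P_def)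
  also have "\<dots> = C0 x * C0 y"
    by (rule decompA[where F="\<lambda>z. C0 x * C0 z" and h="cnj", symmetric])
       (simp_all add: distrib_left C0_add k_comm2 C0_scale)
  finally show ?thesis .
qed

lemma coord_C0: "I \<in> PP \<Longrightarrow> coord (C0 x) I = cnj (coord x I)"
  by (rule coord_unique) (simp add: C0_def)

lemma C0_C0: "C0 (C0 x) = x"
proof -
  have "C0 (C0 x) = (\<Sum>I\<in>PP. \<kappa> (coord x I) * mo I)"
    unfolding C0_def[of "C0 x"] by (rule sum.cong) (simp_all add: coord_C0)
  also have "\<dots> = x" by (rule expand[symmetric])
  finally show ?thesis .
qed

end


lemma prod_list_pos: "(\<forall>x\<in>set xs. (x::real) > 0) \<Longrightarrow> prod_list xs > 0"
  by (induction xs) auto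

context clb begin

lemma sigma_pos:
  fixes \<sigma> :: "'a \<Rightarrow> 'a" and s :: "nat \<Rightarrow> real"
  assumes sadd: "\<And>x y. \<sigma> (x + y) = \<sigma> x + \<sigma> y"
    and sscale: "\<And>c x. \<sigma> (\<kappa> c * x) = \<kappa> (cnj c) * \<sigma> x"
    and smult: "\<And>x y. \<sigma> (x * y) = \<sigma> x * \<sigma> y"
    and sone: "\<sigma> 1 = 1"
    and sg: "\<And>i. i < n \<Longrightarrow> \<sigma> (g i) = \<kappa> (complex_of_real (s i)) * g i"
    and spos: "\<And>i. i < n \<Longrightarrow> s i * q i > 0"
    and x: "x \<noteq> 0"
  shows "tau (\<sigma> (T0 x) * x) \<in> \<real> \<and> Re (tau (\<sigma> (T0 x) * x)) > 0"
proof -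
  have sf: "\<sigma> (fI g I i) = \<kappa> (complex_of_real (if i \<in> I then s i else 1)) * fI g I i" if "i < n" for I i
    using sg[OF that] sone by (simp add: fI_def k_one)
  have sfd: "\<sigma> (fI g I i) * fI g I i = \<kappa> (complex_of_real (if i \<in> I then s i * q i else 1))" if "i < n" for I i
  proof (cases "i \<in> I")
    case True
    then have "\<sigma> (fI g I i) * fI g I i = \<kappa> (complex_of_real (s i)) * (g i * g i)"
      using sg[OF that] by (simp add: fI_def mult.assoc)
    then show ?thesis using True g_sq[OF that] by (simp add: k_mult[symmetric])
  next
    case False
    then show ?thesis using sone by (simp add: fI_def k_one)
  qed
  have Lsig: "\<sigma> (prod_list (rev (map (fI g I) L))) =
      \<kappa> (complex_of_real (prod_list (map (\<lambda>i. if i \<in> I then s i else 1) L))) * prod_list (rev (map (fI g I) L))"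
    if "set L \<subseteq> {..<n}" for I L
    using that
  proof (induction L)
    case Nil
    then show ?case by (simp add: sone k_one)
  next
    case (Cons a L)
    have a: "a < n" using Cons.prems by auto
    have "\<sigma> (prod_list (rev (map (fI g I) (a # L)))) = \<sigma> (prod_list (rev (map (fI g I) L))) * \<sigma> (fI g I a)"
      by (simp add: smult)
    also have "\<dots> = \<kappa> (complex_of_real (prod_list (map (\<lambda>i. if i \<in> I then s i else 1) L))) * prod_list (rev (map (fI g I) L))
        * (\<kappa> (complex_of_real (if a \<in> I then s a else 1)) * fI g I a)"
      using Cons by (simp add: sf[OF a])
    also have "\<dots> = \<kappa> (complex_of_real (if a \<in> I then s a else 1) * complex_of_real (prod_list (map (\<lambda>i. if i \<in> I then s i else 1) L)))
        * (prod_list (rev (map (fI g I) L)) * fI g I a)"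
    proof -
      let ?P = "complex_of_real (prod_list (map (\<lambda>i. if i \<in> I then s i else 1) L))"
      let ?h = "complex_of_real (if a \<in> I then s a else 1)"
      let ?R = "prod_list (rev (map (fI g I) L))"
      have "\<kappa> ?P * ?R * (\<kappa> ?h * fI g I a) = \<kappa> ?P * (\<kappa> ?h * (?R * fI g I a))"
        by (simp only: mult.assoc k_comm2[of ?R])
      also have "\<dots> = \<kappa> (?P * ?h) * (?R * fI g I a)"
        by (simp only: mult.assoc[symmetric] k_mult)
      also have "\<dots> = \<kappa> (?h * ?P) * (?R * fI g I a)"
        by (simp only: mult.commute[of ?P ?h])
      finally show ?thesis .
    qed
    finally show ?case by (simp add: mult.assoc)
  qed
  have Ldiag: "\<sigma> (prod_list (rev (map (fI g I) L))) * prod_list (map (fI g I) L) =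
      \<kappa> (complex_of_real (prod_list (map (\<lambda>i. if i \<in> I then s i * q i else 1) L)))"
    if "set L \<subseteq> {..<n}" for I L
    using that
  proof (induction L)
    case Nil
    then show ?case by (simp add: sone k_one)
  next
    case (Cons a L)
    have a: "a < n" using Cons.prems by auto
    have "\<sigma> (prod_list (rev (map (fI g I) (a # L)))) * prod_list (map (fI g I) (a # L))
        = \<sigma> (prod_list (rev (map (fI g I) L))) * (\<sigma> (fI g I a) * fI g I a) * prod_list (map (fI g I) L)"
      by (simp add: smult mult.assoc)
    also have "\<dots> = \<kappa> (complex_of_real (if a \<in> I then s a * q a else 1)) *
        (\<sigma> (prod_list (rev (map (fI g I) L))) * prod_list (map (fI g I) L))"
      unfolding sfd[OF a] by (simp add: k_comm2 mult.assoc)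
    also have "\<dots> = \<kappa> (complex_of_real (if a \<in> I then s a * q a else 1) *
        complex_of_real (prod_list (map (\<lambda>i. if i \<in> I then s i * q i else 1) L)))"
      using Cons by (simp add: k_mult)
    finally show ?case by simp
  qed
  define d where "d I = prod_list (map (\<lambda>i. if i \<in> I then s i * q i else 1) [0..<n])" for I
  have dpos: "d I > 0" for I
    unfolding d_def by (rule prod_list_pos) (auto intro: spos)
  have diag: "\<sigma> (mr I) * mo I = \<kappa> (complex_of_real (d I))" for I
    unfolding cmonor_def cmono_def d_def by (rule Ldiag) auto
  have smr: "\<exists>p. \<sigma> (mr I) = \<kappa> p * mr I" for I
    unfolding cmonor_def using Lsig[OF set_upt_sub[of 0 n], of I] by (intro exI)
  have offd: "tau (\<sigma> (mr I) * mo J) = 0" if I: "I \<in> PP" and J: "J \<in> PP" and IJ: "I \<noteq> J" for I J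
  proof -
    obtain p where p: "\<sigma> (mr I) = \<kappa> p * mr I" using smr by blast
    obtain e where e: "mr I * mo J = \<kappa> e * mo (symd I J)" using cmonor_mult[of I J] I J by auto
    have "symd I J \<noteq> {}" using IJ by (auto simp: symd_def)
    then have "tau (mo (symd I J)) = 0" using tau_mo[OF symd_PP[OF I J]] by simp
    then show ?thesis unfolding p mult.assoc e by (simp add: tau_scale)
  qed
  define a where "a = coord x"
  have sT: "\<sigma> (T0 x) = (\<Sum>I\<in>PP. \<kappa> (cnj (a I)) * \<sigma> (mr I))"
    unfolding T0_def a_def by (simp add: additive_sum[OF sadd] sscale)
  have col: "tau (\<sigma> (T0 x) * mo J) = cnj (a J) * complex_of_real (d J)" if J: "J \<in> PP" for J
  proof -
    have "tau (\<sigma> (T0 x) * mo J) = (\<Sum>I\<in>PP. cnj (a I) * tau (\<sigma> (mr I) * mo J))"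
      unfolding sT by (simp add: sum_distrib_right tau_sum mult.assoc tau_scale)
    also have "\<dots> = (\<Sum>I\<in>PP. if I = J then cnj (a J) * complex_of_real (d J) else 0)"
    proof (rule sum.cong)
      fix I assume I: "I \<in> PP"
      show "cnj (a I) * tau (\<sigma> (mr I) * mo J) = (if I = J then cnj (a J) * complex_of_real (d J) else 0)"
      proof (cases "I = J")
        case True
        then show ?thesis by (simp add: diag tau_k)
      next
        case False
        then show ?thesis by (simp add: offd[OF I J False])
      qed
    qed simp
    also have "\<dots> = cnj (a J) * complex_of_real (d J)" using J by simp
    finally show ?thesis .
  qed
  have "tau (\<sigma> (T0 x) * x) = (\<Sum>J\<in>PP. a J * tau (\<sigma> (T0 x) * mo J))"
    unfolding a_def
    by (rule decompC[where F="\<lambda>z. tau (\<sigma> (T0 x) * z)"]) (simp_all add: distrib_left tau_add k_comm2 tau_scale)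
  also have "\<dots> = (\<Sum>J\<in>PP. complex_of_real ((cmod (a J))\<^sup>2 * d J))"
  proof (rule sum.cong)
    fix J assume J: "J \<in> PP"
    have nsq: "a J * cnj (a J) = complex_of_real ((cmod (a J))\<^sup>2)"
      by (rule complex_norm_square[symmetric])
    have "a J * tau (\<sigma> (T0 x) * mo J) = (a J * cnj (a J)) * complex_of_real (d J)"
      by (simp add: col[OF J] mult.assoc)
    also have "\<dots> = complex_of_real ((cmod (a J))\<^sup>2 * d J)"
      unfolding nsq of_real_mult ..
    finally show "a J * tau (\<sigma> (T0 x) * mo J) = complex_of_real ((cmod (a J))\<^sup>2 * d J)" .
  qed simp
  also have "\<dots> = complex_of_real (\<Sum>J\<in>PP. (cmod (a J))\<^sup>2 * d J)" by simp
  finally have val: "tau (\<sigma> (T0 x) * x) = complex_of_real (\<Sum>J\<in>PP. (cmod (a J))\<^sup>2 * d J)" .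
  obtain J0 where J0: "J0 \<in> PP" "a J0 \<noteq> 0" using nonzero_coord[OF x] a_def by auto
  have "(\<Sum>J\<in>PP. (cmod (a J))\<^sup>2 * d J) > 0"
    by (rule sum_pos2[OF _ J0(1)]) (simp_all add: J0(2) dpos less_imp_le)
  then show ?thesis unfolding val by simp
qed

end


locale sbil =
  fixes b :: "'v::real_vector \<Rightarrow> 'v \<Rightarrow> real"
  assumes ladd: "b (x + y) z = b x z + b y z"
    and lmul: "b (c *\<^sub>R x) y = c * b x y"
    and bsym: "b x y = b y x"
    and fin: "\<exists>S::'v set. finite S \<and> span S = UNIV"
begin

lemma radd: "b z (x + y) = b z x + b z y"
  using ladd[of x y z] bsym by metis

lemma rmul: "b y (c *\<^sub>R x) = c * b y x"
  using lmul[of c x y] bsym by metis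

lemma lzero[simp]: "b 0 y = 0"
  using ladd[of 0 0 y] by simp

lemma rzero[simp]: "b y 0 = 0"
  using radd[of y 0 0] by simp

lemma lsub: "b (x - y) z = b x z - b y z"
  using ladd[of "x - y" y z] by simp

lemma rsub: "b z (x - y) = b z x - b z y"
  using radd[of z "x - y" y] by simp

lemma lsum: "b (sum f A) y = (\<Sum>a\<in>A. b (f a) y)"
  by (rule additive_sum[where F="\<lambda>x. b x y"]) (rule ladd)

lemma rsum: "b y (sum f A) = (\<Sum>a\<in>A. b y (f a))"
  by (rule additive_sum[where F="\<lambda>x. b y x"]) (rule radd)

lemma finite_indep: "independent (B::'v set) \<Longrightarrow> finite B"
proof -
  assume B: "independent B"
  obtain S :: "'v set" where S: "finite S" "span S = UNIV" using fin by auto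
  show ?thesis using independent_span_bound[OF S(1) B] S(2) by auto
qed

lemma dim_lt:
  assumes A: "subspace (A::'v set)" and W: "subspace W" and AW: "A \<subseteq> W" and x: "x \<in> W" "x \<notin> A"
  shows "dim A < dim W"
proof -
  obtain A0 where A0: "A0 \<subseteq> A" "independent A0" "A \<subseteq> span A0" "card A0 = dim A"
    by (rule basis_exists)
  obtain W0 where W0: "W0 \<subseteq> W" "independent W0" "W \<subseteq> span W0" "card W0 = dim W"
    by (rule basis_exists)
  have fA0: "finite A0" and fW0: "finite W0" using A0(2) W0(2) finite_indep by auto
  have "span A0 \<subseteq> A" using span_minimal[OF A0(1) A] .
  then have xs: "x \<notin> span A0" using x by auto
  have ind: "independent (insert x A0)" by (rule independent_insertI[OF xs A0(2)])
  have "insert x A0 \<subseteq> span W0" using A0(1) AW x W0(3) by auto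
  then have "card (insert x A0) \<le> card W0"
    using independent_span_bound[OF fW0 ind] by auto
  moreover have "x \<notin> A0" using A0(1) x by auto
  ultimately show ?thesis using fA0 A0(4) W0(4) by simp
qed

lemma orth_basis_W:
  "subspace W \<Longrightarrow> (\<forall>u\<in>W. (\<forall>w\<in>W. b u w = 0) \<longrightarrow> u = 0) \<Longrightarrow>
   \<exists>B. finite B \<and> B \<subseteq> W \<and> (\<forall>x\<in>B. \<forall>y\<in>B. x \<noteq> y \<longrightarrow> b x y = 0) \<and> (\<forall>x\<in>B. b x x \<noteq> 0)
      \<and> (\<forall>w\<in>W. w = (\<Sum>x\<in>B. (b w x / b x x) *\<^sub>R x))"
proof (induction "dim W" arbitrary: W rule: less_induct)
  case less
  note W = less.prems(1) and nd = less.prems(2)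
  show ?case
  proof (cases "W \<subseteq> {0}")
    case True
    then show ?thesis by (intro exI[of _ "{}"]) auto
  next
    case False
    then obtain u where u: "u \<in> W" "u \<noteq> 0" by auto
    then obtain w where w: "w \<in> W" "b u w \<noteq> 0" using nd by auto
    obtain x where x: "x \<in> W" "b x x \<noteq> 0"
    proof (cases "b u u \<noteq> 0")
      case True then show ?thesis using that u by auto
    next
      case F1: False
      show ?thesis
      proof (cases "b w w \<noteq> 0")
        case True then show ?thesis using that w by auto
      next
        case F2: False
        have "b (u + w) (u + w) = b u u + b u w + (b w u + b w w)" by (simp add: ladd radd)
        also have "\<dots> = 2 * b u w" using F1 F2 bsym[of w u] by simp
        finally have "b (u + w) (u + w) \<noteq> 0" using w by simp
        moreover have "u + w \<in> W" using W u w by (simp add: subspace_add)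
        ultimately show ?thesis using that by auto
      qed
    qed
    define W' where "W' = {y \<in> W. b x y = 0}"
    have W'sub: "subspace W'"
      unfolding subspace_def W'_def using W
      by (auto simp: subspace_0 subspace_add subspace_scale radd rmul)
    define pr where "pr y = y - (b x y / b x x) *\<^sub>R x" for y
    have pr: "pr y \<in> W'" if "y \<in> W" for y
    proof -
      have "pr y \<in> W" unfolding pr_def using W that x by (simp add: subspace_diff subspace_scale)
      moreover have "b x (pr y) = 0" unfolding pr_def using x by (simp add: rsub rmul)
      ultimately show ?thesis by (simp add: W'_def)
    qed
    have bpr: "b z (pr y) = b z y" if "z \<in> W'" for z y
    proof -
      have "b z x = 0" using that bsym[of z x] by (simp add: W'_def)
      then show ?thesis unfolding pr_def by (simp add: rsub rmul)
    qed
    have nd': "\<forall>u\<in>W'. (\<forall>w\<in>W'. b u w = 0) \<longrightarrow> u = 0"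
    proof (intro ballI impI)
      fix v assume v: "v \<in> W'" and h: "\<forall>w\<in>W'. b v w = 0"
      have "\<forall>y\<in>W. b v y = 0"
      proof
        fix y assume "y \<in> W"
        then have "b v (pr y) = 0" using h pr by auto
        then show "b v y = 0" using bpr[OF v] by simp
      qed
      moreover have "v \<in> W" using v by (simp add: W'_def)
      ultimately show "v = 0" using nd by auto
    qed
    have xW': "x \<notin> W'" using x by (simp add: W'_def)
    have W'W: "W' \<subseteq> W" by (auto simp: W'_def)
    have dlt: "dim W' < dim W" by (rule dim_lt[OF W'sub W W'W x(1) xW'])
    have IH: "\<exists>B. finite B \<and> B \<subseteq> W' \<and> (\<forall>x\<in>B. \<forall>y\<in>B. x \<noteq> y \<longrightarrow> b x y = 0) \<and> (\<forall>x\<in>B. b x x \<noteq> 0)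
      \<and> (\<forall>w\<in>W'. w = (\<Sum>x\<in>B. (b w x / b x x) *\<^sub>R x))"
      by (rule less.hyps[OF dlt W'sub nd'])
    then obtain B' where B':
      "finite B'" "B' \<subseteq> W'" "\<forall>x\<in>B'. \<forall>y\<in>B'. x \<noteq> y \<longrightarrow> b x y = 0" "\<forall>x\<in>B'. b x x \<noteq> 0"
      "\<forall>w\<in>W'. w = (\<Sum>x\<in>B'. (b w x / b x x) *\<^sub>R x)" by (elim exE conjE) (rule that)
    have xB': "x \<notin> B'" using B'(2) xW' by auto
    have orth: "\<forall>y\<in>insert x B'. \<forall>z\<in>insert x B'. y \<noteq> z \<longrightarrow> b y z = 0"
    proof (intro ballI impI)
      fix y z assume y: "y \<in> insert x B'" and z: "z \<in> insert x B'" and yz: "y \<noteq> z"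
      have bx: "b x v = 0" "b v x = 0" if "v \<in> B'" for v
        using that B'(2) bsym[of v x] by (auto simp: W'_def)
      show "b y z = 0" using y z yz B'(3) bx by auto
    qed
    have formula: "\<forall>v\<in>W. v = (\<Sum>y\<in>insert x B'. (b v y / b y y) *\<^sub>R y)"
    proof
      fix v assume v: "v \<in> W"
      have "pr v = (\<Sum>y\<in>B'. (b (pr v) y / b y y) *\<^sub>R y)" using B'(5) pr[OF v] by auto
      also have "\<dots> = (\<Sum>y\<in>B'. (b v y / b y y) *\<^sub>R y)"
      proof (rule sum.cong)
        fix y assume "y \<in> B'"
        then have "y \<in> W'" using B'(2) by auto
        then have "b (pr v) y = b v y" using bpr[of y v] bsym by metis
        then show "(b (pr v) y / b y y) *\<^sub>R y = (b v y / b y y) *\<^sub>R y" by simp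
      qed simp
      finally have "v = (b x v / b x x) *\<^sub>R x + (\<Sum>y\<in>B'. (b v y / b y y) *\<^sub>R y)"
        unfolding pr_def by (simp add: algebra_simps)
      also have "\<dots> = (\<Sum>y\<in>insert x B'. (b v y / b y y) *\<^sub>R y)"
        using B'(1) xB' bsym[of x v] by simp
      finally show "v = (\<Sum>y\<in>insert x B'. (b v y / b y y) *\<^sub>R y)" .
    qed
    show ?thesis
      apply (rule exI[of _ "insert x B'"])
      using B'(1,2,4) x orth formula by (auto simp: W'_def)
  qed
qed

end


context sbil begin

lemma adapted_basis:
  fixes S :: "'v \<Rightarrow> 'v"
  assumes nd: "\<And>u. (\<forall>v. b u v = 0) \<Longrightarrow> u = 0"
    and Sadd: "\<And>x y. S (x + y) = S x + S y" and Smul: "\<And>c x. S (c *\<^sub>R x) = c *\<^sub>R S x"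
    and SS: "\<And>x. S (S x) = x" and Sb: "\<And>x y. b (S x) (S y) = b x y"
  obtains e :: "nat \<Rightarrow> 'v" where
    "\<And>i j. i < dim (UNIV::'v set) \<Longrightarrow> j < dim (UNIV::'v set) \<Longrightarrow> i \<noteq> j \<Longrightarrow> b (e i) (e j) = 0"
    "\<And>i. i < dim (UNIV::'v set) \<Longrightarrow> b (e i) (e i) \<noteq> 0"
    "\<And>i. i < dim (UNIV::'v set) \<Longrightarrow> S (e i) = e i \<or> S (e i) = - e i"
    "\<And>v. v = (\<Sum>i<dim (UNIV::'v set). (b v (e i) / b (e i) (e i)) *\<^sub>R e i)"
proof -
  have S0: "S 0 = 0" using Sadd[of 0 0] by simp
  have Sneg: "S (- x) = - S x" for x using Smul[of "-1" x] by simp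
  have Sdiff: "S (x - y) = S x - S y" for x y using Sadd[of x "-y"] Sneg[of y] by simp
  define Vp where "Vp = {v. S v = v}"
  define Vm where "Vm = {v. S v = - v}"
  have subp: "subspace Vp" unfolding subspace_def Vp_def by (simp add: S0 Sadd Smul)
  have subm: "subspace Vm" unfolding subspace_def Vm_def by (simp add: S0 Sadd Smul)
  have cross: "b x y = 0" if "x \<in> Vp" "y \<in> Vm" for x y
  proof -
    have "b x y = b (S x) (S y)" by (simp add: Sb)
    also have "\<dots> = - b x y" using that by (simp add: Vp_def Vm_def rmul[of x "-1" y, simplified])
    finally show ?thesis by simp
  qed
  define pp where "pp v = (1/2) *\<^sub>R (v + S v)" for v
  define mm where "mm v = (1/2) *\<^sub>R (v - S v)" for v
  have ppmm: "pp v + mm v = v" for v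
  proof -
    have "pp v + mm v = (1/2) *\<^sub>R ((v + S v) + (v - S v))" unfolding pp_def mm_def by (simp only: scaleR_add_right)
    also have "(v + S v) + (v - S v) = 2 *\<^sub>R v" by (simp add: scaleR_2)
    finally show ?thesis by simp
  qed
  have ppV: "pp v \<in> Vp" for v unfolding pp_def Vp_def by (simp add: Smul Sadd SS add.commute)
  have mmV: "mm v \<in> Vm" for v unfolding mm_def Vm_def by (simp add: Smul Sdiff SS scaleR_diff_right)
  have bsplit: "b u v = b u (pp v) + b u (mm v)" for u v using radd[of u "pp v" "mm v"] ppmm by simp
  have ndp: "\<forall>u\<in>Vp. (\<forall>w\<in>Vp. b u w = 0) \<longrightarrow> u = 0"
  proof (intro ballI impI)
    fix u assume u: "u \<in> Vp" and h: "\<forall>w\<in>Vp. b u w = 0"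
    have "b u v = 0" for v using bsplit[of u v] h ppV cross[OF u mmV] by simp
    then show "u = 0" using nd by auto
  qed
  have ndm: "\<forall>u\<in>Vm. (\<forall>w\<in>Vm. b u w = 0) \<longrightarrow> u = 0"
  proof (intro ballI impI)
    fix u assume u: "u \<in> Vm" and h: "\<forall>w\<in>Vm. b u w = 0"
    have "b u v = 0" for v using bsplit[of u v] h mmV cross[OF ppV u] bsym[of u "pp v"] by simp
    then show "u = 0" using nd by auto
  qed
  have "\<exists>B. finite B \<and> B \<subseteq> Vp \<and> (\<forall>x\<in>B. \<forall>y\<in>B. x \<noteq> y \<longrightarrow> b x y = 0) \<and> (\<forall>x\<in>B. b x x \<noteq> 0)
      \<and> (\<forall>w\<in>Vp. w = (\<Sum>x\<in>B. (b w x / b x x) *\<^sub>R x))"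
    by (rule orth_basis_W[OF subp ndp])
  then obtain Bp where Bp: "finite Bp" "Bp \<subseteq> Vp" "\<forall>x\<in>Bp. \<forall>y\<in>Bp. x \<noteq> y \<longrightarrow> b x y = 0"
      "\<forall>x\<in>Bp. b x x \<noteq> 0" "\<forall>w\<in>Vp. w = (\<Sum>x\<in>Bp. (b w x / b x x) *\<^sub>R x)"
    by (elim exE conjE) (rule that)
  have "\<exists>B. finite B \<and> B \<subseteq> Vm \<and> (\<forall>x\<in>B. \<forall>y\<in>B. x \<noteq> y \<longrightarrow> b x y = 0) \<and> (\<forall>x\<in>B. b x x \<noteq> 0)
      \<and> (\<forall>w\<in>Vm. w = (\<Sum>x\<in>B. (b w x / b x x) *\<^sub>R x))"
    by (rule orth_basis_W[OF subm ndm])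
  then obtain Bm where Bm: "finite Bm" "Bm \<subseteq> Vm" "\<forall>x\<in>Bm. \<forall>y\<in>Bm. x \<noteq> y \<longrightarrow> b x y = 0"
      "\<forall>x\<in>Bm. b x x \<noteq> 0" "\<forall>w\<in>Vm. w = (\<Sum>x\<in>Bm. (b w x / b x x) *\<^sub>R x)"
    by (elim exE conjE) (rule that)
  define B where "B = Bp \<union> Bm"
  have fB: "finite B" using Bp(1) Bm(1) by (simp add: B_def)
  have disj: "Bp \<inter> Bm = {}"
  proof (rule ccontr)
    assume "Bp \<inter> Bm \<noteq> {}"
    then obtain x where x: "x \<in> Bp" "x \<in> Bm" by auto
    then have "x \<in> Vp" "x \<in> Vm" using Bp(2) Bm(2) by auto
    then have "b x x = 0" using cross by auto
    with x Bp(4) show False by auto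
  qed
  have orth: "b x y = 0" if "x \<in> B" "y \<in> B" "x \<noteq> y" for x y
  proof -
    have c1: "b x y = 0" if "x \<in> Bp" "y \<in> Bm" for x y using cross that Bp(2) Bm(2) by auto
    have c2: "b x y = 0" if "x \<in> Bm" "y \<in> Bp" for x y using c1[OF that(2,1)] bsym[of x y] by simp
    show ?thesis using that Bp(3) Bm(3) c1 c2 by (auto simp: B_def)
  qed
  have nz: "b x x \<noteq> 0" if "x \<in> B" for x using that Bp(4) Bm(4) by (auto simp: B_def)
  have eig: "S x = x \<or> S x = - x" if "x \<in> B" for x using that Bp(2) Bm(2) by (auto simp: B_def Vp_def Vm_def)
  have formula: "v = (\<Sum>x\<in>B. (b v x / b x x) *\<^sub>R x)" for v
  proof -
    have p: "pp v = (\<Sum>x\<in>Bp. (b v x / b x x) *\<^sub>R x)"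
    proof -
      have "pp v = (\<Sum>x\<in>Bp. (b (pp v) x / b x x) *\<^sub>R x)" using Bp(5) ppV by auto
      also have "\<dots> = (\<Sum>x\<in>Bp. (b v x / b x x) *\<^sub>R x)"
      proof (rule sum.cong)
        fix x assume "x \<in> Bp"
        then have "x \<in> Vp" using Bp(2) by auto
        then have "b (mm v) x = 0" using cross[OF _ mmV, of x] bsym[of "mm v" x] by simp
        then have "b (pp v) x = b v x" using ladd[of "pp v" "mm v" x] ppmm by simp
        then show "(b (pp v) x / b x x) *\<^sub>R x = (b v x / b x x) *\<^sub>R x" by simp
      qed simp
      finally show ?thesis .
    qed
    have m: "mm v = (\<Sum>x\<in>Bm. (b v x / b x x) *\<^sub>R x)"
    proof -
      have "mm v = (\<Sum>x\<in>Bm. (b (mm v) x / b x x) *\<^sub>R x)" using Bm(5) mmV by auto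
      also have "\<dots> = (\<Sum>x\<in>Bm. (b v x / b x x) *\<^sub>R x)"
      proof (rule sum.cong)
        fix x assume "x \<in> Bm"
        then have "x \<in> Vm" using Bm(2) by auto
        then have "b (pp v) x = 0" using cross[OF ppV, of x] by simp
        then have "b (mm v) x = b v x" using ladd[of "pp v" "mm v" x] ppmm by simp
        then show "(b (mm v) x / b x x) *\<^sub>R x = (b v x / b x x) *\<^sub>R x" by simp
      qed simp
      finally show ?thesis .
    qed
    have "v = pp v + mm v" using ppmm by simp
    also have "\<dots> = (\<Sum>x\<in>B. (b v x / b x x) *\<^sub>R x)"
      unfolding p m B_def using Bp(1) Bm(1) disj by (simp add: sum.union_disjoint)
    finally show ?thesis .
  qed
  have indB: "independent B"
  proof (rule independent_if_scalars_zero[OF fB])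
    fix f x assume h: "(\<Sum>x\<in>B. f x *\<^sub>R x) = 0" and x: "x \<in> B"
    have "0 = b (\<Sum>y\<in>B. f y *\<^sub>R y) x" using h by simp
    also have "\<dots> = (\<Sum>y\<in>B. f y * b y x)" by (simp add: lsum lmul)
    also have "\<dots> = (\<Sum>y\<in>B. if y = x then f x * b x x else 0)"
      by (rule sum.cong) (auto simp: orth x)
    also have "\<dots> = f x * b x x" using fB x by simp
    finally show "f x = 0" using nz[OF x] by simp
  qed
  have spB: "span B = UNIV"
  proof -
    have "v \<in> span B" for v
      by (subst formula[of v]) (intro span_sum span_scale span_base)
    then show ?thesis by auto
  qed
  have dimB: "dim (UNIV::'v set) = card B"
    using dim_eq_card[of B UNIV] indB spB by simp
  obtain h where h: "bij_betw h {0..<card B} B" using ex_bij_betw_nat_finite[OF fB] by blast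
  have hB: "h i \<in> B" if "i < dim (UNIV::'v set)" for i
  proof -
    have "i \<in> {0..<card B}" using that dimB by simp
    then show ?thesis using bij_betwE[OF h] by blast
  qed
  have hinj: "h i \<noteq> h j" if "i < dim (UNIV::'v set)" "j < dim (UNIV::'v set)" "i \<noteq> j" for i j
  proof
    assume "h i = h j"
    moreover have "i \<in> {0..<card B}" "j \<in> {0..<card B}" using that dimB by simp_all
    ultimately have "i = j" using inj_onD[OF bij_betw_imp_inj_on[OF h]] by blast
    with that(3) show False by simp
  qed
  show ?thesis
  proof (rule that[of h])
    fix i j assume "i < dim (UNIV::'v set)" "j < dim (UNIV::'v set)" "i \<noteq> j"
    then show "b (h i) (h j) = 0" using orth hB hinj by auto
  next
    fix i assume "i < dim (UNIV::'v set)"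
    then show "b (h i) (h i) \<noteq> 0" using nz hB by auto
  next
    fix i assume "i < dim (UNIV::'v set)"
    then show "S (h i) = h i \<or> S (h i) = - h i" using eig hB by auto
  next
    fix v
    have "(\<Sum>i<dim (UNIV::'v set). (b v (h i) / b (h i) (h i)) *\<^sub>R h i) = (\<Sum>x\<in>B. (b v x / b x x) *\<^sub>R x)"
      unfolding dimB lessThan_atLeast0 by (rule sum.reindex_bij_betw[OF h])
    then show "v = (\<Sum>i<dim (UNIV::'v set). (b v (h i) / b (h i) (h i)) *\<^sub>R h i)" using formula[of v] by simp
  qed
qed

end


locale cl_setup = sbil b for b :: "'v::real_vector \<Rightarrow> 'v \<Rightarrow> real" +
  fixes Q :: "'v \<Rightarrow> real" and sm :: "complex \<Rightarrow> 'a::ring_1 \<Rightarrow> 'a" and \<iota> :: "'v \<Rightarrow> 'a"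
    and n :: nat and e :: "nat \<Rightarrow> 'v"
  assumes Qb: "Q v = b v v"
    and cl: "complex_clifford Q sm \<iota>"
    and e_orth: "i < n \<Longrightarrow> j < n \<Longrightarrow> i \<noteq> j \<Longrightarrow> b (e i) (e j) = 0"
    and e_nz: "i < n \<Longrightarrow> b (e i) (e i) \<noteq> 0"
    and e_exp: "v = (\<Sum>i<n. (b v (e i) / b (e i) (e i)) *\<^sub>R e i)"
    and n_dim: "n = dim (UNIV :: 'v set)"
    and n_ev: "even n"
begin

definition kap :: "complex \<Rightarrow> 'a" where "kap c = sm c 1"
definition gv :: "nat \<Rightarrow> 'a" where "gv i = \<iota> (e i)"
definition qv :: "nat \<Rightarrow> real" where "qv i = b (e i) (e i)"

lemma cl_alg: "complex_algebra sm" using cl by (simp add: complex_clifford_def)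
lemma smod: "module sm" using cl_alg by (simp add: complex_algebra_def)
lemma sm_mult1: "sm c (x * y) = sm c x * y" using cl_alg unfolding complex_algebra_def by blast
lemma sm_mult2: "sm c (x * y) = x * sm c y" using cl_alg unfolding complex_algebra_def by blast
lemma i_add: "\<iota> (u + v) = \<iota> u + \<iota> v" using cl by (simp add: complex_clifford_def)
lemma i_scale: "\<iota> (r *\<^sub>R v) = sm (complex_of_real r) (\<iota> v)" using cl by (simp add: complex_clifford_def)
lemma i_sq: "\<iota> v * \<iota> v = sm (complex_of_real (Q v)) 1" using cl by (simp add: complex_clifford_def)
lemma i_gen: "generates sm (range \<iota>)" using cl by (simp add: complex_clifford_def)
lemma cdim: "complex_dim sm = 2 ^ n" using cl n_dim by (simp add: complex_clifford_def)

interpretation M: vector_space sm using smod by (simp add: module_iff_vector_space)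

lemma sm_k: "sm c x = kap c * x"
  unfolding kap_def using sm_mult1[of c 1 x] by simp

lemma kk_add: "kap (x + y) = kap x + kap y"
  unfolding kap_def by (rule M.scale_left_distrib)

lemma kk_mult: "kap (x * y) = kap x * kap y"
proof -
  have "kap (x * y) = sm x (sm y 1)" unfolding kap_def by simp
  also have "\<dots> = sm x 1 * sm y 1" using sm_mult1[of x 1 "sm y 1"] by simp
  finally show ?thesis unfolding kap_def .
qed

lemma kk_one: "kap 1 = 1" unfolding kap_def by simp

lemma kk_zero: "kap 0 = 0" unfolding kap_def by simp

lemma kk_comm: "kap c * z = z * kap c"
  unfolding kap_def using sm_mult1[of c 1 z] sm_mult2[of c z 1] by simp

lemma i_zero: "\<iota> 0 = 0" using i_add[of 0 0] by simp

lemma i_neg: "\<iota> (- v) = - \<iota> v"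
proof -
  have "\<iota> v + \<iota> (- v) = 0" using i_add[of v "-v"] i_zero by simp
  then show ?thesis by (rule sym[OF add.inverse_unique])
qed

lemma i_diff: "\<iota> (u - v) = \<iota> u - \<iota> v"
  using i_add[of u "-v"] i_neg[of v] by simp

lemma i_scale': "\<iota> (r *\<^sub>R v) = kap (complex_of_real r) * \<iota> v"
  by (simp add: i_scale sm_k)

lemma i_sq': "\<iota> v * \<iota> v = kap (complex_of_real (b v v))"
  by (simp add: i_sq Qb kap_def)

lemma i_sum: "\<iota> (sum f A) = (\<Sum>a\<in>A. \<iota> (f a))"
  by (rule additive_sum) (rule i_add)

lemma i_anti: "\<iota> u * \<iota> w + \<iota> w * \<iota> u = kap (complex_of_real (2 * b u w))"
proof -
  have "\<iota> (u + w) * \<iota> (u + w) = \<iota> u * \<iota> u + (\<iota> u * \<iota> w + \<iota> w * \<iota> u) + \<iota> w * \<iota> w"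
    by (simp add: i_add algebra_simps)
  moreover have "b (u + w) (u + w) = b u u + 2 * b u w + b w w"
    using bsym[of w u] by (simp add: ladd radd)
  ultimately have "kap (complex_of_real (b u u)) + (\<iota> u * \<iota> w + \<iota> w * \<iota> u) + kap (complex_of_real (b w w))
      = kap (complex_of_real (b u u)) + kap (complex_of_real (2 * b u w)) + kap (complex_of_real (b w w))"
    by (simp only: i_sq' of_real_add kk_add)
  then show ?thesis by simp
qed

sublocale clb0 kap n gv qv
proof
  show "kap (x + y) = kap x + kap y" for x y by (rule kk_add)
  show "kap (x * y) = kap x * kap y" for x y by (rule kk_mult)
  show "kap 1 = 1" by (rule kk_one)
  show "kap c * z = z * kap c" for c z by (rule kk_comm)
  show "gv i * gv i = kap (complex_of_real (qv i))" if "i < n" for i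
    unfolding gv_def qv_def by (rule i_sq')
  show "gv i * gv j = - (gv j * gv i)" if "i < n" "j < n" "i \<noteq> j" for i j
  proof -
    have "gv i * gv j + gv j * gv i = 0"
      unfolding gv_def using i_anti[of "e i" "e j"] e_orth[OF that] by (simp add: kk_zero)
    then show ?thesis by (simp add: eq_neg_iff_add_eq_0)
  qed
qed

definition Sp :: "'a set" where
  "Sp = {x. \<exists>c. x = (\<Sum>I\<in>Pow {..<n}. kap (c I) * cmono gv n I)}"

lemma SpI: "x = (\<Sum>I\<in>Pow {..<n}. kap (c I) * cmono gv n I) \<Longrightarrow> x \<in> Sp"
  unfolding Sp_def by blast

lemma Sp_add: "x \<in> Sp \<Longrightarrow> y \<in> Sp \<Longrightarrow> x + y \<in> Sp"
proof -
  assume "x \<in> Sp" "y \<in> Sp"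
  then obtain c d where c: "x = (\<Sum>I\<in>Pow {..<n}. kap (c I) * cmono gv n I)"
    and d: "y = (\<Sum>I\<in>Pow {..<n}. kap (d I) * cmono gv n I)" by (auto simp: Sp_def)
  have "x + y = (\<Sum>I\<in>Pow {..<n}. kap (c I + d I) * cmono gv n I)"
    unfolding c d by (simp add: sum.distrib kk_add distrib_right)
  then show ?thesis by (rule SpI)
qed

lemma Sp_scale: "x \<in> Sp \<Longrightarrow> kap a * x \<in> Sp"
proof -
  assume "x \<in> Sp"
  then obtain c where c: "x = (\<Sum>I\<in>Pow {..<n}. kap (c I) * cmono gv n I)" by (auto simp: Sp_def)
  have "kap a * x = (\<Sum>I\<in>Pow {..<n}. kap (a * c I) * cmono gv n I)"
    unfolding c by (simp add: sum_distrib_left kk_mult mult.assoc)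
  then show ?thesis by (rule SpI)
qed

lemma Sp_zero: "0 \<in> Sp"
proof -
  have "(0::'a) = (\<Sum>I\<in>Pow {..<n}. kap 0 * cmono gv n I)" by simp
  then show ?thesis by (rule SpI)
qed

lemma Sp_sum: "(\<And>a. a \<in> A \<Longrightarrow> f a \<in> Sp) \<Longrightarrow> sum f A \<in> Sp"
proof (induction A rule: infinite_finite_induct)
  case (infinite A) then show ?case by (simp add: Sp_zero)
next
  case empty then show ?case by (simp add: Sp_zero)
next
  case (insert x F) then show ?case by (simp add: Sp_add)
qed

lemma Sp_mono: "J \<subseteq> {..<n} \<Longrightarrow> cmono gv n J \<in> Sp"
proof -
  assume J: "J \<subseteq> {..<n}"
  have "(\<Sum>I\<in>Pow {..<n}. kap (if I = J then 1 else 0) * cmono gv n I) = (\<Sum>I\<in>Pow {..<n}. if I = J then cmono gv n I else 0)"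
    by (rule sum.cong) (simp_all add: kk_one)
  also have "\<dots> = cmono gv n J" using J by simp
  finally show ?thesis by (intro SpI) (rule sym)
qed

lemma Sp_mult: "x \<in> Sp \<Longrightarrow> y \<in> Sp \<Longrightarrow> x * y \<in> Sp"
proof -
  assume "x \<in> Sp" "y \<in> Sp"
  then obtain c d where c: "x = (\<Sum>I\<in>Pow {..<n}. kap (c I) * cmono gv n I)"
    and d: "y = (\<Sum>I\<in>Pow {..<n}. kap (d I) * cmono gv n I)" by (auto simp: Sp_def)
  have "x * y = (\<Sum>J\<in>Pow {..<n}. \<Sum>I\<in>Pow {..<n}. kap (c I * d J) * (cmono gv n I * cmono gv n J))"
  proof -
    have trm: "kap a * mI * (kap dd * mJ) = kap (a * dd) * (mI * mJ)" for a dd mI mJ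
    proof -
      have "mI * (kap dd * mJ) = kap dd * (mI * mJ)" by (simp only: mult.assoc[symmetric] kk_comm[of dd mI])
      then show ?thesis by (simp only: mult.assoc kk_mult)
    qed
    show ?thesis unfolding c d by (simp only: sum_distrib_right sum_distrib_left trm)
  qed
  also have "\<dots> \<in> Sp"
  proof (intro Sp_sum Sp_scale)
    fix J I assume "J \<in> Pow {..<n}" "I \<in> Pow {..<n}"
    then obtain e' where "cmono gv n I * cmono gv n J = kap e' * cmono gv n (symd I J)"
      using cmono_mult[of J I] by auto
    moreover have "symd I J \<subseteq> {..<n}" using \<open>I \<in> Pow {..<n}\<close> \<open>J \<in> Pow {..<n}\<close> by (auto simp: symd_def)
    ultimately show "cmono gv n I * cmono gv n J \<in> Sp" using Sp_scale Sp_mono by simp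
  qed
  finally show ?thesis .
qed

lemma i_exp: "\<iota> v = (\<Sum>i<n. kap (complex_of_real (b v (e i) / qv i)) * gv i)"
proof -
  have "\<iota> v = \<iota> (\<Sum>i<n. (b v (e i) / b (e i) (e i)) *\<^sub>R e i)" by (subst e_exp[of v]) (rule refl)
  also have "\<dots> = (\<Sum>i<n. kap (complex_of_real (b v (e i) / qv i)) * gv i)"
    by (simp add: i_sum i_scale' gv_def qv_def)
  finally show ?thesis .
qed

lemma Sp_i: "\<iota> v \<in> Sp"
proof -
  have "gv i \<in> Sp" if "i \<in> {..<n}" for i
  proof -
    have "gv i = cmono gv n {i}" using that by (simp add: cmono_single)
    moreover have "cmono gv n {i} \<in> Sp" using that by (intro Sp_mono) auto
    ultimately show ?thesis by simp
  qed
  then show ?thesis unfolding i_exp[of v] by (intro Sp_sum Sp_scale)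
qed

lemma Sp_UNIV: "Sp = UNIV"
proof -
  have "1 \<in> Sp" using Sp_mono[of "{}"] by simp
  moreover have "range \<iota> \<subseteq> Sp" using Sp_i by auto
  moreover have "\<forall>x\<in>Sp. \<forall>y\<in>Sp. x + y \<in> Sp \<and> x * y \<in> Sp" using Sp_add Sp_mult by auto
  moreover have "\<forall>c. \<forall>x\<in>Sp. sm c x \<in> Sp" using Sp_scale by (simp add: sm_k)
  ultimately show ?thesis using i_gen unfolding generates_def by blast
qed

lemma spans': "\<exists>c. x = (\<Sum>I\<in>Pow {..<n}. kap (c I) * cmono gv n I)"
  using Sp_UNIV unfolding Sp_def by blast

lemma indep':
  assumes z: "(\<Sum>I\<in>Pow {..<n}. kap (c I) * cmono gv n I) = 0" and I0: "I0 \<subseteq> {..<n}"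
  shows "c I0 = 0"
proof (rule ccontr)
  assume c0: "c I0 \<noteq> 0"
  let ?P = "Pow {..<n}"
  let ?M = "cmono gv n ` ?P"
  have fP: "finite ?P" by simp
  have spM: "M.span ?M = UNIV"
  proof -
    have "x \<in> M.span ?M" for x
    proof -
      obtain d where "x = (\<Sum>I\<in>?P. kap (d I) * cmono gv n I)" using spans' by blast
      also have "\<dots> = (\<Sum>I\<in>?P. sm (d I) (cmono gv n I))" by (simp add: sm_k)
      also have "\<dots> \<in> M.span ?M" by (intro M.span_sum M.span_scale M.span_base) auto
      finally show ?thesis .
    qed
    then show ?thesis by auto
  qed
  have dimU: "M.dim (UNIV::'a set) = 2 ^ n" using cdim by (simp add: complex_dim_def)
  have cP: "card ?P = 2 ^ n" by (simp add: card_Pow)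
  have "M.dim (UNIV::'a set) \<le> card ?M" using M.dim_le_card[of UNIV ?M] spM by simp
  moreover have "card ?M \<le> card ?P" by (rule card_image_le[OF fP])
  ultimately have "card ?M = card ?P" using dimU cP by simp
  then have inj: "inj_on (cmono gv n) ?P" by (rule eq_card_imp_inj_on[OF fP])
  let ?M' = "cmono gv n ` (?P - {I0})"
  have I0P: "I0 \<in> ?P" using I0 by simp
  have "cmono gv n I0 = (\<Sum>I\<in>?P - {I0}. sm (- c I / c I0) (cmono gv n I))"
  proof -
    have "0 = kap (c I0) * cmono gv n I0 + (\<Sum>I\<in>?P - {I0}. kap (c I) * cmono gv n I)"
      using z sum.remove[OF fP I0P, of "\<lambda>I. kap (c I) * cmono gv n I"] by simp
    then have "kap (c I0) * cmono gv n I0 = - (\<Sum>I\<in>?P - {I0}. kap (c I) * cmono gv n I)"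
      by (simp add: eq_neg_iff_add_eq_0)
    then have "kap (1 / c I0) * (kap (c I0) * cmono gv n I0) = kap (1 / c I0) * - (\<Sum>I\<in>?P - {I0}. kap (c I) * cmono gv n I)"
      by simp
    then have "cmono gv n I0 = - (\<Sum>I\<in>?P - {I0}. kap (1 / c I0) * (kap (c I) * cmono gv n I))"
      using c0 by (simp add: mult.assoc[symmetric] kk_mult[symmetric] kk_one sum_distrib_left)
    also have "\<dots> = (\<Sum>I\<in>?P - {I0}. sm (- c I / c I0) (cmono gv n I))"
      by (simp add: sm_k mult.assoc[symmetric] kk_mult[symmetric] sum_negf[symmetric] k_uminus)
    finally show ?thesis .
  qed
  also have "\<dots> \<in> M.span ?M'" by (intro M.span_sum M.span_scale M.span_base) auto
  finally have m0: "cmono gv n I0 \<in> M.span ?M'" .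
  have "?M \<subseteq> M.span ?M'"
  proof
    fix x assume "x \<in> ?M"
    then obtain I where I: "I \<in> ?P" "x = cmono gv n I" by auto
    show "x \<in> M.span ?M'"
    proof (cases "I = I0")
      case True then show ?thesis using m0 I by simp
    next
      case False then show ?thesis using I by (intro M.span_base) auto
    qed
  qed
  then have "M.span ?M \<subseteq> M.span ?M'" using M.span_mono[of ?M "M.span ?M'"] M.span_span by simp
  then have "UNIV \<subseteq> M.span ?M'" using spM by simp
  then have "M.dim (UNIV::'a set) \<le> card ?M'" using M.dim_le_card[of UNIV ?M'] by simp
  also have "\<dots> \<le> card (?P - {I0})" by (rule card_image_le) simp
  also have "\<dots> = 2 ^ n - 1" using cP I0P by (simp add: card_Diff_singleton)
  finally have le: "M.dim (UNIV::'a set) \<le> 2 ^ n - 1" .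
  have pos: "(0::nat) < 2 ^ n" by simp
  show False using le pos unfolding dimU by arith
qed

sublocale clb kap n gv qv
proof
  show "\<exists>c. x = (\<Sum>I\<in>Pow {..<n}. kap (c I) * cmono gv n I)" for x by (rule spans')
  show "c I = 0" if "(\<Sum>I\<in>Pow {..<n}. kap (c I) * cmono gv n I) = 0" "I \<subseteq> {..<n}" for c I
    using indep'[OF that] .
  show "qv i \<noteq> 0" if "i < n" for i using e_nz[OF that] by (simp add: qv_def)
  show "even n" by (rule n_ev)
qed

end


context cl_setup begin

lemma tau_zero: "tau 0 = 0"
  using tau_k[of 0] by (simp add: kk_zero)

lemma VC_zero:
  assumes z: "\<iota> u + kap \<i> * \<iota> w = 0"
  shows "u = 0 \<and> w = 0"
proof -
  define a where "a i = complex_of_real (b u (e i) / qv i) + \<i> * complex_of_real (b w (e i) / qv i)" for i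
  have X: "\<iota> u + kap \<i> * \<iota> w = (\<Sum>i<n. kap (a i) * gv i)"
    unfolding i_exp[of u] i_exp[of w] a_def
    by (simp add: sum_distrib_left sum.distrib kk_add kk_mult distrib_right mult.assoc del: of_real_divide)
  have a0: "a j = 0" if j: "j < n" for j
  proof -
    have "a j * complex_of_real (qv j) = tau ((\<Sum>i<n. kap (a i) * gv i) * gv j)"
      by (rule coef_extract[OF j, symmetric])
    also have "\<dots> = 0" unfolding X[symmetric] z by (simp add: tau_zero)
    finally show ?thesis using q_nz[OF j] by simp
  qed
  have cu: "b u (e j) / qv j = 0" and cw: "b w (e j) / qv j = 0" if "j < n" for j
  proof -
    have "Re (a j) = 0" "Im (a j) = 0" using a0[OF that] by simp_all
    then show "b u (e j) / qv j = 0" "b w (e j) / qv j = 0" by (simp_all add: a_def)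
  qed
  have "u = (\<Sum>i<n. (b u (e i) / b (e i) (e i)) *\<^sub>R e i)" by (rule e_exp)
  also have "\<dots> = 0" using cu[unfolded qv_def] by (intro sum.neutral ballI) simp
  finally have "u = 0" .
  moreover have "w = (\<Sum>i<n. (b w (e i) / b (e i) (e i)) *\<^sub>R e i)" by (rule e_exp)
  moreover have "(\<Sum>i<n. (b w (e i) / b (e i) (e i)) *\<^sub>R e i) = 0"
    using cw[unfolded qv_def] by (intro sum.neutral ballI) simp
  ultimately show ?thesis by simp
qed

lemma VC_unique:
  assumes "\<iota> u1 + sm \<i> (\<iota> w1) = \<iota> u2 + sm \<i> (\<iota> w2)"
  shows "u1 = u2 \<and> w1 = w2"
proof -
  have "\<iota> (u1 - u2) + kap \<i> * \<iota> (w1 - w2) = (\<iota> u1 + kap \<i> * \<iota> w1) - (\<iota> u2 + kap \<i> * \<iota> w2)"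
    by (simp add: i_diff right_diff_distrib)
  also have "\<dots> = 0" using assms by (simp add: sm_k)
  finally show ?thesis using VC_zero by fastforce
qed

lemma sm_zero: "sm c 0 = 0" by (simp add: sm_k)

lemma i_inj: "\<iota> u = \<iota> v \<Longrightarrow> u = v"
  using VC_unique[of u 0 v 0] by (simp add: i_zero sm_zero)

lemma polar_eq: "polar Q u v = b u v"
  unfolding polar_def Qb using bsym[of v u] by (simp add: ladd radd)

lemma Bc_eq: "Bc Q sm \<iota> (\<iota> u1 + sm \<i> (\<iota> w1)) (\<iota> u2 + sm \<i> (\<iota> w2))
   = Complex (b u1 u2 - b w1 w2) (b u1 w2 + b w1 u2)"
  unfolding Bc_def
proof (rule the_equality)
  show "\<exists>u1' w1' u2' w2'. \<iota> u1 + sm \<i> (\<iota> w1) = \<iota> u1' + sm \<i> (\<iota> w1') \<and>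
      \<iota> u2 + sm \<i> (\<iota> w2) = \<iota> u2' + sm \<i> (\<iota> w2') \<and>
      Complex (b u1 u2 - b w1 w2) (b u1 w2 + b w1 u2) =
      Complex (polar Q u1' u2' - polar Q w1' w2') (polar Q u1' w2' + polar Q w1' u2')"
    by (intro exI[of _ u1] exI[of _ w1] exI[of _ u2] exI[of _ w2]) (simp add: polar_eq)
next
  fix z assume "\<exists>u1' w1' u2' w2'. \<iota> u1 + sm \<i> (\<iota> w1) = \<iota> u1' + sm \<i> (\<iota> w1') \<and>
      \<iota> u2 + sm \<i> (\<iota> w2) = \<iota> u2' + sm \<i> (\<iota> w2') \<and>
      z = Complex (polar Q u1' u2' - polar Q w1' w2') (polar Q u1' w2' + polar Q w1' u2')"
  then obtain u1' w1' u2' w2' where h: "\<iota> u1 + sm \<i> (\<iota> w1) = \<iota> u1' + sm \<i> (\<iota> w1')"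
    "\<iota> u2 + sm \<i> (\<iota> w2) = \<iota> u2' + sm \<i> (\<iota> w2')"
    "z = Complex (polar Q u1' u2' - polar Q w1' w2') (polar Q u1' w2' + polar Q w1' u2')" by blast
  from VC_unique[OF h(1)] VC_unique[OF h(2)] h(3)
  show "z = Complex (b u1 u2 - b w1 w2) (b u1 w2 + b w1 u2)" by (simp add: polar_eq)
qed

lemma gen_UNIV:
  assumes "1 \<in> A" "\<And>v. \<iota> v \<in> A" "\<And>x y. x \<in> A \<Longrightarrow> y \<in> A \<Longrightarrow> x + y \<in> A"
    "\<And>x y. x \<in> A \<Longrightarrow> y \<in> A \<Longrightarrow> x * y \<in> A" "\<And>c x. x \<in> A \<Longrightarrow> sm c x \<in> A"
  shows "A = UNIV"
proof -
  have h: "1 \<in> A \<and> range \<iota> \<subseteq> A \<and> (\<forall>x\<in>A. \<forall>y\<in>A. x + y \<in> A \<and> x * y \<in> A) \<and> (\<forall>c. \<forall>x\<in>A. sm c x \<in> A)"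
    using assms by auto
  have g: "\<forall>S. 1 \<in> S \<and> range \<iota> \<subseteq> S \<and> (\<forall>x\<in>S. \<forall>y\<in>S. x + y \<in> S \<and> x * y \<in> S) \<and> (\<forall>c. \<forall>x\<in>S. sm c x \<in> S) \<longrightarrow> S = UNIV"
    using i_gen unfolding generates_def .
  show ?thesis using g[rule_format, OF h] .
qed

lemma C0_i: "C0 (\<iota> v) = \<iota> v"
proof -
  have "C0 (\<iota> v) = (\<Sum>i<n. C0 (kap (complex_of_real (b v (e i) / qv i)) * gv i))"
    unfolding i_exp[of v] by (rule additive_sum) (rule C0_add)
  also have "\<dots> = (\<Sum>i<n. kap (complex_of_real (b v (e i) / qv i)) * gv i)"
    by (rule sum.cong) (simp_all add: C0_scale C0_single)
  also have "\<dots> = \<iota> v" by (rule i_exp[symmetric])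
  finally show ?thesis .
qed

lemma T0_i: "T0 (\<iota> v) = \<iota> v"
proof -
  have "T0 (\<iota> v) = (\<Sum>i<n. T0 (kap (complex_of_real (b v (e i) / qv i)) * gv i))"
    unfolding i_exp[of v] by (rule additive_sum) (rule T0_add)
  also have "\<dots> = (\<Sum>i<n. kap (complex_of_real (b v (e i) / qv i)) * gv i)"
    by (rule sum.cong) (simp_all add: T0_scale T0_single)
  also have "\<dots> = \<iota> v" by (rule i_exp[symmetric])
  finally show ?thesis .
qed

lemma C0_aa: "antilinear_automorphism sm C0"
proof -
  have s: "C0 (sm c x) = sm (cnj c) (C0 x)" for c x using C0_scale[of c x] by (simp add: sm_k)
  have bj: "bij C0" by (rule involuntory_imp_bij) (rule C0_C0)
  show ?thesis unfolding antilinear_automorphism_def using bj C0_add s C0_mult C0_one by blast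
qed

lemma cconj_eq: "cconj sm \<iota> = C0"
  unfolding cconj_def
proof (rule the_equality)
  show "antilinear_automorphism sm C0 \<and> (\<forall>v. C0 (\<iota> v) = \<iota> v)" using C0_aa C0_i by simp
next
  fix c assume c: "antilinear_automorphism sm c \<and> (\<forall>v. c (\<iota> v) = \<iota> v)"
  have cadd: "c (x + y) = c x + c y" and csm: "c (sm a x) = sm (cnj a) (c x)" and cmul: "c (x * y) = c x * c y"
    and c1: "c 1 = 1" for x y a
    using c unfolding antilinear_automorphism_def by blast+
  have "{x. c x = C0 x} = UNIV"
  proof (rule gen_UNIV)
    show "1 \<in> {x. c x = C0 x}" using c1 C0_one by simp
    show "\<iota> v \<in> {x. c x = C0 x}" for v using c C0_i by simp
    show "x + y \<in> {x. c x = C0 x}" if "x \<in> {x. c x = C0 x}" "y \<in> {x. c x = C0 x}" for x y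
      using that by (simp add: cadd C0_add)
    show "x * y \<in> {x. c x = C0 x}" if "x \<in> {x. c x = C0 x}" "y \<in> {x. c x = C0 x}" for x y
      using that by (simp add: cmul C0_mult)
    show "sm a x \<in> {x. c x = C0 x}" if "x \<in> {x. c x = C0 x}" for a x
    proof -
      have "c (sm a x) = sm (cnj a) (C0 x)" using csm[of a x] that by simp
      moreover have "C0 (sm a x) = sm (cnj a) (C0 x)" using C0_scale[of a x] by (simp add: sm_k)
      ultimately show ?thesis by simp
    qed
  qed
  then show "c = C0" by auto
qed

lemma transp_eq: "transp sm \<iota> = T0"
  unfolding transp_def
proof (rule the_equality)
  show "(\<forall>x y. T0 (x + y) = T0 x + T0 y) \<and> (\<forall>c x. T0 (sm c x) = sm c (T0 x)) \<and>
      (\<forall>x y. T0 (x * y) = T0 y * T0 x) \<and> T0 1 = 1 \<and> (\<forall>v. T0 (\<iota> v) = \<iota> v)"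
  proof -
    have s: "T0 (sm c x) = sm c (T0 x)" for c x using T0_scale[of c x] by (simp add: sm_k)
    show ?thesis using T0_add s T0_anti T0_one T0_i by blast
  qed
next
  fix T assume T: "(\<forall>x y. T (x + y) = T x + T y) \<and> (\<forall>c x. T (sm c x) = sm c (T x)) \<and>
      (\<forall>x y. T (x * y) = T y * T x) \<and> T 1 = 1 \<and> (\<forall>v. T (\<iota> v) = \<iota> v)"
  have Tadd: "T (x + y) = T x + T y" and Tsm: "T (sm a x) = sm a (T x)" and Tmul: "T (x * y) = T y * T x"
    and T1: "T 1 = 1" and Ti: "T (\<iota> v) = \<iota> v" for x y a v
    using T by blast+
  have "{x. T x = T0 x} = UNIV"
  proof (rule gen_UNIV)
    show "1 \<in> {x. T x = T0 x}" using T1 T0_one by simp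
    show "\<iota> v \<in> {x. T x = T0 x}" for v using Ti T0_i by simp
    show "x + y \<in> {x. T x = T0 x}" if "x \<in> {x. T x = T0 x}" "y \<in> {x. T x = T0 x}" for x y
      using that by (simp add: Tadd T0_add)
    show "x * y \<in> {x. T x = T0 x}" if "x \<in> {x. T x = T0 x}" "y \<in> {x. T x = T0 x}" for x y
      using that by (simp add: Tmul T0_anti)
    show "sm a x \<in> {x. T x = T0 x}" if "x \<in> {x. T x = T0 x}" for a x
    proof -
      have "T (sm a x) = sm a (T0 x)" using Tsm[of a x] that by simp
      moreover have "T0 (sm a x) = sm a (T0 x)" using T0_scale[of a x] by (simp add: sm_k)
      ultimately show ?thesis by simp
    qed
  qed
  then show "T = T0" by auto
qed

lemma tau_one: "tau 1 = 1"
  using tau_k[of 1] by (simp add: kk_one)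

lemma ntrace_eq: "ntrace sm = tau"
  unfolding ntrace_def
proof (rule the_equality)
  show "(\<forall>x y. tau (x + y) = tau x + tau y) \<and> (\<forall>c x. tau (sm c x) = c * tau x) \<and>
      (\<forall>a b. tau (a * b) = tau (b * a)) \<and> tau 1 = 1"
  proof -
    have s: "tau (sm c x) = c * tau x" for c x using tau_scale[of c x] by (simp add: sm_k)
    show ?thesis using tau_add s tau_cyclic tau_one by blast
  qed
next
  fix t assume t: "(\<forall>x y. t (x + y) = t x + t y) \<and> (\<forall>c x. t (sm c x) = c * t x) \<and>
      (\<forall>a b. t (a * b) = t (b * a)) \<and> t 1 = 1"
  have "t x = tau x" for x
  proof (rule trace_unique)
    show "t (x + y) = t x + t y" for x y using t by blast
    show "t (kap c * x) = c * t x" for c x using t by (simp add: sm_k[symmetric])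
    show "t (a * b) = t (b * a)" for a b using t by blast
    show "t 1 = 1" using t by blast
  qed
  then show "t = tau" by auto
qed

end


lemma neg_self_zero: "- x = (x::'v::real_vector) \<Longrightarrow> x = 0"
proof -
  assume h: "- x = x"
  have "(2::real) *\<^sub>R x = x + x" by (rule scaleR_2)
  also have "\<dots> = x + - x" using h by simp
  finally show "x = 0" by simp
qed

lemma cpos_Complex: "cpos (Complex r 0) \<longleftrightarrow> r > 0"
  by (simp add: cpos_def complex_is_Real_iff)

theorem proposition6:
  fixes Q :: "'v::real_vector \<Rightarrow> real"
    and sm :: "complex \<Rightarrow> 'a::ring_1 \<Rightarrow> 'a"
    and \<iota> :: "'v \<Rightarrow> 'a"
    and \<sigma> :: "'a \<Rightarrow> 'a"
  assumes fin: "finite_dim_space TYPE('v)"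
    and even: "even (dim (UNIV :: 'v set))"
    and qf: "quadratic_form Q"
    and nondeg: "nondegenerate Q"
    and cl: "complex_clifford Q sm \<iota>"
    and adm: "admissible sm \<iota> \<sigma>"
  defines "Vplus \<equiv> {v. \<iota> v \<in> Vsigma sm \<iota> \<sigma>}"
    and "Vminus \<equiv> {v. \<iota> v \<in> sm \<i> ` Vsigma sm \<iota> \<sigma>}"
  shows
    "(((\<forall>v\<in>Vplus. v \<noteq> 0 \<longrightarrow> Q v > 0) \<and> (\<forall>v\<in>Vminus. v \<noteq> 0 \<longrightarrow> Q v < 0))
       \<longleftrightarrow> (\<forall>v. v \<noteq> 0 \<longrightarrow> cpos (Qsigma Q sm \<iota> \<sigma> v))) \<and>
    ((\<forall>v. v \<noteq> 0 \<longrightarrow> cpos (Qsigma Q sm \<iota> \<sigma> v))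
       \<longleftrightarrow> (\<forall>x\<in>Vsigma sm \<iota> \<sigma>. x \<noteq> 0 \<longrightarrow> cpos (Bc Q sm \<iota> x x))) \<and>
    ((\<forall>x\<in>Vsigma sm \<iota> \<sigma>. x \<noteq> 0 \<longrightarrow> cpos (Bc Q sm \<iota> x x))
       \<longleftrightarrow> (\<forall>a. a \<noteq> 0 \<longrightarrow> cpos (sigma_product sm \<iota> \<sigma> a a)))"
proof -
  obtain b where bil: "bilinear b" and bs: "\<And>u v. b u v = b v u" and Qb: "\<And>v. Q v = b v v"
    using qf unfolding quadratic_form_def by blast
  have finS: "\<exists>S::'v set. finite S \<and> span S = UNIV" using fin unfolding finite_dim_space_def .
  have sb: "sbil b"
  proof
    show "b (x + y) z = b x z + b y z" for x y z by (rule bilinear_ladd[OF bil])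
    show "b (c *\<^sub>R x) y = c * b x y" for c x y using bilinear_lmul[OF bil] by simp
    show "b x y = b y x" for x y by (rule bs)
    show "\<exists>S::'v set. finite S \<and> span S = UNIV" by (rule finS)
  qed
  interpret sbil b by (rule sb)
  have polar_b: "polar Q u v = b u v" for u v
    unfolding polar_def Qb using bsym[of v u] by (simp add: ladd radd)
  have ndb: "u = 0" if "\<forall>v. b u v = 0" for u
    using nondeg that unfolding nondegenerate_def polar_b by blast
  let ?n = "dim (UNIV::'v set)"
  obtain e1 where e1: "\<And>i j. i < ?n \<Longrightarrow> j < ?n \<Longrightarrow> i \<noteq> j \<Longrightarrow> b (e1 i) (e1 j) = 0"
    "\<And>i. i < ?n \<Longrightarrow> b (e1 i) (e1 i) \<noteq> 0"
    "\<And>i. i < ?n \<Longrightarrow> id (e1 i) = e1 i \<or> id (e1 i) = - e1 i"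
    "\<And>v. v = (\<Sum>i<?n. (b v (e1 i) / b (e1 i) (e1 i)) *\<^sub>R e1 i)"
    by (rule adapted_basis[OF ndb, of id]) auto
  have cs1: "cl_setup b Q sm \<iota> ?n e1"
    unfolding cl_setup_def cl_setup_axioms_def using sb Qb cl e1(1,2,4) even by blast
  interpret L1: cl_setup b Q sm \<iota> ?n e1 by (rule cs1)

  have saa: "antilinear_automorphism sm \<sigma>" and sinv: "\<And>x. \<sigma> (\<sigma> x) = x"
    and sVC: "\<sigma> ` VC sm \<iota> \<subseteq> VC sm \<iota>" and scomm: "\<sigma> \<circ> cconj sm \<iota> = cconj sm \<iota> \<circ> \<sigma>"
    using adm unfolding admissible_def real_structure_def by blast+
  have sadd: "\<sigma> (x + y) = \<sigma> x + \<sigma> y" and ssm: "\<sigma> (sm c x) = sm (cnj c) (\<sigma> x)"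
    and smul: "\<sigma> (x * y) = \<sigma> x * \<sigma> y" and sone: "\<sigma> 1 = 1" for x y c
    using saa unfolding antilinear_automorphism_def by blast+
  have sC: "L1.C0 (\<sigma> x) = \<sigma> (L1.C0 x)" for x
    using fun_cong[OF scomm, of x] L1.cconj_eq by simp
  have sm_neg_i: "sm (- \<i>) y = sm \<i> (- y)" for y by (simp add: L1.sm_k L1.k_uminus)
  have VCI: "\<iota> u + sm \<i> (\<iota> w) \<in> VC sm \<iota>" for u w unfolding VC_def by blast
  have iota_VC: "\<iota> v = \<iota> v + sm \<i> (\<iota> 0)" for v by (simp add: L1.i_zero L1.sm_zero)
  have exS: "\<exists>u. \<sigma> (\<iota> v) = \<iota> u" for v
  proof -
    have "\<sigma> (\<iota> v) \<in> VC sm \<iota>" using sVC VCI[of v 0] iota_VC[of v] by auto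
    then obtain u w where uw: "\<sigma> (\<iota> v) = \<iota> u + sm \<i> (\<iota> w)" unfolding VC_def by blast
    have "L1.C0 (\<iota> u + sm \<i> (\<iota> w)) = \<iota> u + sm \<i> (\<iota> (- w))"
      by (simp add: L1.C0_add L1.sm_k L1.C0_scale L1.C0_i L1.i_neg L1.k_uminus)
    moreover have "L1.C0 (\<sigma> (\<iota> v)) = \<sigma> (\<iota> v)" using sC L1.C0_i by simp
    ultimately have "\<iota> u + sm \<i> (\<iota> (- w)) = \<iota> u + sm \<i> (\<iota> w)" using uw by simp
    then have "- w = w" using L1.VC_unique by blast
    then have "w = 0" by (rule neg_self_zero)
    then show ?thesis using uw by (auto simp: L1.i_zero L1.sm_zero)
  qed
  define S where "S v = (SOME u. \<sigma> (\<iota> v) = \<iota> u)" for v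
  have Si: "\<sigma> (\<iota> v) = \<iota> (S v)" for v unfolding S_def using someI_ex[OF exS[of v]] .
  have Sadd: "S (x + y) = S x + S y" for x y
  proof (rule L1.i_inj)
    show "\<iota> (S (x + y)) = \<iota> (S x + S y)"
      unfolding Si[symmetric] L1.i_add sadd by (simp add: Si)
  qed
  have Smul: "S (c *\<^sub>R x) = c *\<^sub>R S x" for c x
  proof (rule L1.i_inj)
    show "\<iota> (S (c *\<^sub>R x)) = \<iota> (c *\<^sub>R S x)"
      unfolding Si[symmetric] L1.i_scale ssm by (simp add: Si)
  qed
  have SS: "S (S x) = x" for x
  proof (rule L1.i_inj)
    show "\<iota> (S (S x)) = \<iota> x" unfolding Si[symmetric] sinv ..
  qed
  have SQ: "b (S x) (S x) = b x x" for x
  proof -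
    have "L1.kap (complex_of_real (b (S x) (S x))) = \<iota> (S x) * \<iota> (S x)" by (simp add: L1.i_sq')
    also have "\<dots> = \<sigma> (\<iota> x * \<iota> x)" by (simp add: smul Si)
    also have "\<dots> = L1.kap (complex_of_real (b x x))" by (simp add: L1.i_sq' L1.kap_def ssm sone)
    finally show ?thesis by (simp add: L1.k_eq_iff)
  qed
  have Sb: "b (S x) (S y) = b x y" for x y
  proof -
    have "b (S (x + y)) (S (x + y)) = b (x + y) (x + y)" by (rule SQ)
    then have "b (S x) (S x) + 2 * b (S x) (S y) + b (S y) (S y) = b x x + 2 * b x y + b y y"
      unfolding Sadd using bsym[of "S y" "S x"] bsym[of y x] by (simp add: ladd radd)
    then show ?thesis using SQ[of x] SQ[of y] by simp
  qed
  obtain e2 where e2: "\<And>i j. i < ?n \<Longrightarrow> j < ?n \<Longrightarrow> i \<noteq> j \<Longrightarrow> b (e2 i) (e2 j) = 0"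
    "\<And>i. i < ?n \<Longrightarrow> b (e2 i) (e2 i) \<noteq> 0"
    "\<And>i. i < ?n \<Longrightarrow> S (e2 i) = e2 i \<or> S (e2 i) = - e2 i"
    "\<And>v. v = (\<Sum>i<?n. (b v (e2 i) / b (e2 i) (e2 i)) *\<^sub>R e2 i)"
    by (rule adapted_basis[OF ndb Sadd Smul SS Sb]) auto
  have cs2: "cl_setup b Q sm \<iota> ?n e2"
    unfolding cl_setup_def cl_setup_axioms_def using sb Qb cl e2(1,2,4) even by blast
  interpret L2: cl_setup b Q sm \<iota> ?n e2 by (rule cs2)

  have Sneg: "S (- x) = - S x" for x using Smul[of "-1" x] by simp
  have S0: "S 0 = 0" using Smul[of 0 0] by simp
  have sVCe: "\<sigma> (\<iota> u + sm \<i> (\<iota> w)) = \<iota> (S u) + sm \<i> (\<iota> (- S w))" for u w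
    by (simp add: sadd ssm Si sm_neg_i L1.i_neg)
  have Vs_char: "x \<in> Vsigma sm \<iota> \<sigma> \<longleftrightarrow> (\<exists>u w. x = \<iota> u + sm \<i> (\<iota> w) \<and> S u = u \<and> S w = - w)" for x
  proof
    assume "x \<in> Vsigma sm \<iota> \<sigma>"
    then have xV: "x \<in> VC sm \<iota>" and fx: "\<sigma> x = x" unfolding Vsigma_def by auto
    from xV obtain u w where x: "x = \<iota> u + sm \<i> (\<iota> w)" unfolding VC_def by blast
    have "\<iota> (S u) + sm \<i> (\<iota> (- S w)) = \<iota> u + sm \<i> (\<iota> w)" using fx x sVCe by simp
    then have "S u = u \<and> - S w = w" using L2.VC_unique by blast
    then have "S u = u" "S w = - w" by (auto simp: minus_equation_iff)
    then show "\<exists>u w. x = \<iota> u + sm \<i> (\<iota> w) \<and> S u = u \<and> S w = - w" using x by blast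
  next
    assume "\<exists>u w. x = \<iota> u + sm \<i> (\<iota> w) \<and> S u = u \<and> S w = - w"
    then obtain u w where x: "x = \<iota> u + sm \<i> (\<iota> w)" and Su: "S u = u" and Sw: "S w = - w" by blast
    have "\<sigma> x = x" unfolding x sVCe Su Sw by simp
    then show "x \<in> Vsigma sm \<iota> \<sigma>" unfolding Vsigma_def using x VCI by auto
  qed
  have Vplus_eq: "v \<in> Vplus \<longleftrightarrow> S v = v" for v
  proof
    assume "v \<in> Vplus"
    then obtain u w where h: "\<iota> v = \<iota> u + sm \<i> (\<iota> w)" "S u = u" "S w = - w"
      unfolding Vplus_def Vs_char by blast
    have "v = u \<and> 0 = w" using L2.VC_unique[of v 0 u w] h(1) iota_VC[of v] by simp
    then show "S v = v" using h by simp
  next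
    assume "S v = v"
    then have "\<iota> v = \<iota> v + sm \<i> (\<iota> 0) \<and> S v = v \<and> S 0 = - 0" using iota_VC[of v] S0 by simp
    then show "v \<in> Vplus" unfolding Vplus_def Vs_char mem_Collect_eq by blast
  qed
  have Vminus_eq: "v \<in> Vminus \<longleftrightarrow> S v = - v" for v
  proof
    assume "v \<in> Vminus"
    then obtain x where x: "x \<in> Vsigma sm \<iota> \<sigma>" "\<iota> v = sm \<i> x" unfolding Vminus_def by blast
    then obtain u w where h: "x = \<iota> u + sm \<i> (\<iota> w)" "S u = u" "S w = - w" unfolding Vs_char by blast
    have "sm \<i> x = \<iota> (- w) + sm \<i> (\<iota> u)"
      unfolding h(1) by (simp add: L1.sm_k distrib_left L1.k_comm2 mult.assoc[symmetric] L1.kk_mult[symmetric] L1.i_neg add.commute L1.kk_one L1.k_uminus)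
    then have "v = - w \<and> 0 = u" using L2.VC_unique[of v 0 "- w" u] x(2) iota_VC[of v] by simp
    then show "S v = - v" using h Sneg by simp
  next
    assume Sv: "S v = - v"
    have xin: "\<iota> 0 + sm \<i> (\<iota> (- v)) \<in> Vsigma sm \<iota> \<sigma>" unfolding Vs_char
    proof (rule exI[of _ 0], rule exI[of _ "- v"], intro conjI)
      show "\<iota> 0 + sm \<i> (\<iota> (- v)) = \<iota> 0 + sm \<i> (\<iota> (- v))" by (rule refl)
      show "S 0 = 0" by (rule S0)
      show "S (- v) = - (- v)" using Sneg[of v] Sv by simp
    qed
    have "sm \<i> (\<iota> 0 + sm \<i> (\<iota> (- v))) = \<iota> v"
      by (simp add: L1.sm_k L1.i_zero L1.i_neg mult.assoc[symmetric] L1.kk_mult[symmetric] L1.k_uminus L1.kk_one)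
    then show "v \<in> Vminus" unfolding Vminus_def using xin by (metis image_eqI mem_Collect_eq)
  qed
  have Qs_eq: "Qsigma Q sm \<iota> \<sigma> v = Complex (b (S v) v) 0" for v
  proof -
    have "Qsigma Q sm \<iota> \<sigma> v = Bc Q sm \<iota> (\<iota> (S v) + sm \<i> (\<iota> 0)) (\<iota> v + sm \<i> (\<iota> 0))"
      unfolding Qsigma_def Si using iota_VC by simp
    then show ?thesis by (simp add: L2.Bc_eq)
  qed
  have orth_pm: "b u w = 0" if "S u = u" "S w = - w" for u w
  proof -
    have "b u w = b (S u) (S w)" by (simp add: Sb)
    also have "\<dots> = - b u w" using that rmul[of u "-1" w] by simp
    finally show ?thesis by simp
  qed
  define v1 where "v1 v = (1/2) *\<^sub>R (v + S v)" for v
  define v2 where "v2 v = (1/2) *\<^sub>R (v - S v)" for v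
  have Sdiff: "S (x - y) = S x - S y" for x y using Sadd[of x "-y"] Sneg[of y] by simp
  have Sv1: "S (v1 v) = v1 v" for v unfolding v1_def by (simp add: Smul Sadd SS add.commute)
  have Sv2: "S (v2 v) = - v2 v" for v unfolding v2_def by (simp add: Smul Sdiff SS scaleR_diff_right)
  have v12: "v = v1 v + v2 v" for v
  proof -
    have "v1 v + v2 v = (1/2) *\<^sub>R ((v + S v) + (v - S v))" unfolding v1_def v2_def by (simp only: scaleR_add_right)
    also have "(v + S v) + (v - S v) = 2 *\<^sub>R v" by (simp add: scaleR_2)
    finally show ?thesis by simp
  qed
  have Sv12: "S v = v1 v - v2 v" for v
    using Sadd[of "v1 v" "v2 v"] v12[of v] Sv1[of v] Sv2[of v] by simp
  have bSv: "b (S v) v = b (v1 v) (v1 v) - b (v2 v) (v2 v)" for v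
  proof -
    have o: "b (v1 v) (v2 v) = 0" by (rule orth_pm[OF Sv1 Sv2])
    have "b (S v) v = b (v1 v - v2 v) (v1 v + v2 v)" using Sv12[of v] v12[of v] by simp
    also have "\<dots> = b (v1 v) (v1 v) - b (v2 v) (v2 v)"
      using o bsym[of "v2 v" "v1 v"] by (simp add: lsub radd)
    finally show ?thesis .
  qed
  have Bcx: "Bc Q sm \<iota> (\<iota> u + sm \<i> (\<iota> w)) (\<iota> u + sm \<i> (\<iota> w)) = Complex (b u u - b w w) 0"
    if "S u = u" "S w = - w" for u w
    using L2.Bc_eq[of u w u w] orth_pm[OF that] bsym[of w u] by simp
  have Vs0: "\<iota> u + sm \<i> (\<iota> w) = 0 \<longleftrightarrow> u = 0 \<and> w = 0" for u w
    using L2.VC_unique[of u w 0 0] by (auto simp: L1.i_zero L1.sm_zero)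

  define P1 where "P1 \<longleftrightarrow> (\<forall>v\<in>Vplus. v \<noteq> 0 \<longrightarrow> Q v > 0) \<and> (\<forall>v\<in>Vminus. v \<noteq> 0 \<longrightarrow> Q v < 0)"
  define P2 where "P2 \<longleftrightarrow> (\<forall>v. v \<noteq> 0 \<longrightarrow> cpos (Qsigma Q sm \<iota> \<sigma> v))"
  define P3 where "P3 \<longleftrightarrow> (\<forall>x\<in>Vsigma sm \<iota> \<sigma>. x \<noteq> 0 \<longrightarrow> cpos (Bc Q sm \<iota> x x))"
  define P4 where "P4 \<longleftrightarrow> (\<forall>a. a \<noteq> 0 \<longrightarrow> cpos (sigma_product sm \<iota> \<sigma> a a))"
  have P2_alt: "P2 \<longleftrightarrow> (\<forall>v. v \<noteq> 0 \<longrightarrow> b (S v) v > 0)"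
    unfolding P2_def Qs_eq cpos_Complex ..
  have P12: "P1 \<longleftrightarrow> P2"
  proof
    assume P1
    then have pp: "b v v > 0" if "S v = v" "v \<noteq> 0" for v
      using that Vplus_eq Qb unfolding P1_def by auto
    have mm: "b v v < 0" if "S v = - v" "v \<noteq> 0" for v
      using that Vminus_eq Qb \<open>P1\<close> unfolding P1_def by auto
    show P2 unfolding P2_alt
    proof (intro allI impI)
      fix v :: 'v assume v: "v \<noteq> 0"
      have a: "b (v1 v) (v1 v) \<ge> 0" using pp[OF Sv1] by (cases "v1 v = 0") (auto intro: less_imp_le)
      have c: "b (v2 v) (v2 v) \<le> 0" using mm[OF Sv2] by (cases "v2 v = 0") (auto intro: less_imp_le)
      have "v1 v \<noteq> 0 \<or> v2 v \<noteq> 0" using v v12[of v] by auto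
      then have "b (v1 v) (v1 v) > 0 \<or> b (v2 v) (v2 v) < 0" using pp[OF Sv1] mm[OF Sv2] by auto
      then show "b (S v) v > 0" unfolding bSv using a c by auto
    qed
  next
    assume P2
    show P1 unfolding P1_def
    proof (intro conjI ballI impI)
      fix v assume "v \<in> Vplus" "v \<noteq> 0"
      then show "Q v > 0" using \<open>P2\<close> unfolding P2_alt Vplus_eq Qb by auto
    next
      fix v assume "v \<in> Vminus" "v \<noteq> 0"
      then have "b (- v) v > 0" using \<open>P2\<close> unfolding P2_alt Vminus_eq by metis
      then show "Q v < 0" unfolding Qb using bilinear_lneg[OF bil, of v v] by simp
    qed
  qed
  have P23: "P2 \<longleftrightarrow> P3"
  proof
    assume P2
    show P3 unfolding P3_def
    proof (intro ballI impI)
      fix x assume "x \<in> Vsigma sm \<iota> \<sigma>" "x \<noteq> 0"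
      then obtain u w where h: "x = \<iota> u + sm \<i> (\<iota> w)" "S u = u" "S w = - w" unfolding Vs_char by blast
      have "u + w \<noteq> 0"
      proof
        assume uw: "u + w = 0"
        then have "w = - u" by (simp add: eq_neg_iff_add_eq_0 add.commute)
        then have "S w = - S u" using Sneg by simp
        then have "- u = u" using h(2,3) \<open>w = - u\<close> by simp
        then have "u = 0" by (rule neg_self_zero)
        then show False using uw h(1) \<open>x \<noteq> 0\<close> Vs0 by simp
      qed
      then have "b (S (u + w)) (u + w) > 0" using \<open>P2\<close> unfolding P2_alt by blast
      moreover have "b (S (u + w)) (u + w) = b u u - b w w"
        using Sadd[of u w] h(2,3) orth_pm[OF h(2,3)] bsym[of w u] by (simp add: ladd radd lsub)
      ultimately show "cpos (Bc Q sm \<iota> x x)" unfolding h(1) Bcx[OF h(2,3)] cpos_Complex by simp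
    qed
  next
    assume P3
    show P2 unfolding P2_alt
    proof (intro allI impI)
      fix v :: 'v assume v: "v \<noteq> 0"
      let ?x = "\<iota> (v1 v) + sm \<i> (\<iota> (v2 v))"
      have xin: "?x \<in> Vsigma sm \<iota> \<sigma>" unfolding Vs_char using Sv1 Sv2 by blast
      have "?x \<noteq> 0" using Vs0 v v12[of v] by auto
      then have "cpos (Bc Q sm \<iota> ?x ?x)" using \<open>P3\<close> xin unfolding P3_def by blast
      then show "b (S v) v > 0" unfolding Bcx[OF Sv1 Sv2] cpos_Complex bSv .
    qed
  qed
  have sp_eq: "sigma_product sm \<iota> \<sigma> a a = L2.tau (\<sigma> (L2.T0 a) * a)" for a
    unfolding sigma_product_def L2.transp_eq L2.ntrace_eq ..
  have P34: "P3 \<longleftrightarrow> P4"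
  proof
    assume P3
    then have P1 using P12 P23 by simp
    define s where "s i = (if S (e2 i) = e2 i then 1 else (-1::real))" for i
    show P4 unfolding P4_def
    proof (intro allI impI)
      fix a :: 'a assume a: "a \<noteq> 0"
      have "L2.tau (\<sigma> (L2.T0 a) * a) \<in> \<real> \<and> Re (L2.tau (\<sigma> (L2.T0 a) * a)) > 0"
      proof (rule L2.sigma_pos[where s=s])
        show "\<sigma> (x + y) = \<sigma> x + \<sigma> y" for x y by (rule sadd)
        show "\<sigma> (L2.kap c * x) = L2.kap (cnj c) * \<sigma> x" for c x using ssm[of c x] by (simp add: L2.sm_k)
        show "\<sigma> (x * y) = \<sigma> x * \<sigma> y" for x y by (rule smul)
        show "\<sigma> 1 = 1" by (rule sone)
        show "\<sigma> (L2.gv i) = L2.kap (complex_of_real (s i)) * L2.gv i" if "i < ?n" for i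
          using e2(3)[OF that] by (auto simp: L2.gv_def Si s_def L2.kk_one L1.k_uminus L2.i_neg)
        show "s i * L2.qv i > 0" if i: "i < ?n" for i
        proof -
          have ne: "e2 i \<noteq> 0" using e2(2)[OF i] by auto
          show ?thesis
          proof (cases "S (e2 i) = e2 i")
            case True
            then have "e2 i \<in> Vplus" using Vplus_eq by simp
            then show ?thesis using \<open>P1\<close> ne True unfolding P1_def s_def L2.qv_def Qb by auto
          next
            case False
            then have "S (e2 i) = - e2 i" using e2(3)[OF i] by auto
            then have "e2 i \<in> Vminus" using Vminus_eq by simp
            then show ?thesis using \<open>P1\<close> ne False unfolding P1_def s_def L2.qv_def Qb by auto
          qed
        qed
        show "a \<noteq> 0" by (rule a)
      qed
      then show "cpos (sigma_product sm \<iota> \<sigma> a a)" unfolding sp_eq cpos_def by simp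
    qed
  next
    assume P4
    show P3 unfolding P3_def
    proof (intro ballI impI)
      fix x assume xin: "x \<in> Vsigma sm \<iota> \<sigma>" and x0: "x \<noteq> 0"
      then obtain u w where h: "x = \<iota> u + sm \<i> (\<iota> w)" "S u = u" "S w = - w" unfolding Vs_char by blast
      have sx: "\<sigma> x = x" using xin unfolding Vsigma_def by simp
      have Tx: "L2.T0 x = x" unfolding h(1) by (simp add: L2.sm_k L2.T0_add L2.T0_scale L2.T0_i)
      have xx: "x * x = L2.kap (Complex (b u u - b w w) 0)"
      proof -
        have o: "b u w = 0" by (rule orth_pm[OF h(2,3)])
        have a1: "\<iota> u * \<iota> w + \<iota> w * \<iota> u = 0"
        proof -
          have "\<iota> u * \<iota> w + \<iota> w * \<iota> u = L2.kap (complex_of_real (2 * b u w))" by (rule L2.i_anti)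
          also have "\<dots> = 0" unfolding o by (simp only: mult_zero_right of_real_0 L2.kk_zero)
          finally show ?thesis .
        qed
        define K where "K = L2.kap \<i>"
        define A where "A = \<iota> u"
        define B where "B = \<iota> w"
        have x': "x = A + K * B" by (simp only: h(1) L2.sm_k K_def A_def B_def)
        have e1: "A * (K * B) = K * (A * B)" unfolding K_def by (rule L2.k_comm2)
        have e2: "(K * B) * A = K * (B * A)" by (simp only: mult.assoc)
        have e3: "(K * B) * (K * B) = K * K * (B * B)"
        proof -
          have "(K * B) * (K * B) = K * (B * (K * B))" by (simp only: mult.assoc)
          also have "B * (K * B) = K * (B * B)" unfolding K_def by (rule L2.k_comm2)
          finally show ?thesis by (simp only: mult.assoc)
        qed
        have "x * x = A * A + (K * B * A + (A * (K * B) + K * B * (K * B)))"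
          unfolding x' by (simp only: distrib_left distrib_right add.assoc)
        also have "\<dots> = A * A + K * (A * B + B * A) + K * K * (B * B)"
          by (simp only: e1 e2 e3 distrib_left add.assoc add.left_commute add.commute)
        also have "A * B + B * A = 0" unfolding A_def B_def by (rule a1)
        also have "A * A = L2.kap (complex_of_real (b u u))" unfolding A_def by (rule L2.i_sq')
        also have "B * B = L2.kap (complex_of_real (b w w))" unfolding B_def by (rule L2.i_sq')
        also have "K * K * L2.kap (complex_of_real (b w w)) = L2.kap (\<i> * \<i> * complex_of_real (b w w))"
          unfolding K_def by (simp only: L2.kk_mult)
        also have "L2.kap (complex_of_real (b u u)) + K * 0 + L2.kap (\<i> * \<i> * complex_of_real (b w w))
            = L2.kap (complex_of_real (b u u) + \<i> * \<i> * complex_of_real (b w w))"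
          by (simp only: mult_zero_right add_0_right L2.kk_add)
        also have "complex_of_real (b u u) + \<i> * \<i> * complex_of_real (b w w) = Complex (b u u - b w w) 0"
          by (simp add: complex_eq_iff)
        finally show ?thesis .
      qed
      have "x \<noteq> 0" by (rule x0)
      then have "cpos (sigma_product sm \<iota> \<sigma> x x)" using \<open>P4\<close> unfolding P4_def by blast
      moreover have "sigma_product sm \<iota> \<sigma> x x = Complex (b u u - b w w) 0"
        unfolding sp_eq Tx sx xx by (rule L2.tau_k)
      moreover have "Bc Q sm \<iota> x x = Complex (b u u - b w w) 0" unfolding h(1) by (rule Bcx[OF h(2,3)])
      ultimately show "cpos (Bc Q sm \<iota> x x)" by simp
    qed
  qed
  show ?thesis using P12 P23 P34 unfolding P1_def P2_def P3_def P4_def by blast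
qed


end
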